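(* Let $(B_q)_{q\in\mathbb{N}}$ be a sequence of balls in $\mathbb{R}^m/\mathbb{Z}^m$ with $\sum_q|B_q|=\infty$. Then: (i) If $m\ge3$, the sets $(A_{1,m}(q,B_q))_{q\in\mathbb{N}}$ are quasi-independent on average, i.e. $\limsup_{Q\to\infty}\bigl(\sum_{q=1}^Q|A_{1,m}(q,B_q)|\bigr)^2\big/\sum_{q,r=1}^Q|A_{1,m}(q,B_q)\cap A_{1,m}(r,B_r)|>0$. (ii) If $m\ge2$, then for all $Q$, \[\sum_{1\le r\le q\le Q}\frac{\gcd(q,r)}{r}\bigl|A_{1,m}(r,B_r)\cap A_{1,m}(q,(r/q)^{1/m}B_q)\bigr|\ll\Bigl(\sum_{q=1}^Q|A_{1,m}(q,B_q)|\Bigr)^2 .\] (iii) If $m\ge1$, then for all $Q$, \[\sum_{1\le r\le q\le Q}\Bigl(\frac{\gcd(q,r)}{r}\Bigr)^2\bigl|A_{1,m}(r,B_r)\cap A_{1,m}(q,(r/q)^{2/m}B_q)\bigr|\ll\Bigl(\sum_{q=1}^Q|A_{1,m}(q,B_q)|\Bigr)^2 .\] The implied constants are independent of $Q$ (for $Q$ large enough that the right-hand sums are at least $1$). In particular the sets $(A_{1,m}(q,B_q))_q$ are $\max\{3-m,0\}$-QIA.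
   Context: Balls are max-norm balls in $\mathbb{R}^m/\mathbb{Z}^m$; $cB$ is the ball with the same centre as $B$ and radius multiplied by $c>0$; $|\cdot|$ is Lebesgue measure. For $q\in\mathbb{Z}$, $A_{1,m}(q,B)=\{\mathbf{x}\in[0,1]^m:q\mathbf{x}+\mathbf{p}\in B\text{ for some }\mathbf{p}\in\mathbb{Z}^m\}$; note $|A_{1,m}(q,B)|=|B|$. For $w\ge0$, the sets $(A_{1,m}(q,B_q))_{q\ge1}$ are $w$-QIA if $\limsup_{Q\to\infty}\bigl(\sum_{q\le Q}|B_q|\bigr)^2\bigl(\sum_{1\le r\le q\le Q}(\gcd(r,q)/r)^w|A_{1,m}(r,B_r)\cap A_{1,m}(q,(r/q)^{w/m}B_q)|\bigr)^{-1}>0$. *)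

theory Defs
  imports "HOL-Analysis.Analysis"
begin

text \<open>Dimension m = CARD('n). Points of R^m are vectors real^'n; subsets of the torus
R^m/Z^m are represented by their Z^m-periodic preimages in R^m.\<close>

definition unit_cube :: "(real^'n) set" where
  "unit_cube = {x. \<forall>i. 0 \<le> x$i \<and> x$i \<le> 1}"

definition torus_ball :: "real^'n \<Rightarrow> real \<Rightarrow> (real^'n) set" where
  "torus_ball c rho = {y. \<exists>p::int^'n. \<forall>i. \<bar>y$i - c$i - of_int (p$i)\<bar> < rho}"

definition torus_vol :: "(real^'n) set \<Rightarrow> real" where
  "torus_vol B = measure lebesgue (B \<inter> {x. \<forall>i. 0 \<le> x$i \<and> x$i < 1})"

definition A1m :: "nat \<Rightarrow> (real^'n) set \<Rightarrow> (real^'n) set" where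
  "A1m q B = {x \<in> unit_cube. \<exists>p::int^'n. (real q *\<^sub>R x + (\<chi> i. of_int (p$i))) \<in> B}"

text \<open>w-QIA for the sets A_{1,m}(q, B_q), B_q = torus_ball (c q) (rho q);
  the ball (r/q)^{w/m} B_q has the same centre and radius scaled.\<close>
definition w_QIA :: "real \<Rightarrow> (nat \<Rightarrow> real^'n) \<Rightarrow> (nat \<Rightarrow> real) \<Rightarrow> bool" where
  "w_QIA w c rho \<longleftrightarrow>
     limsup (\<lambda>Q. ereal ((\<Sum>q=1..Q. torus_vol (torus_ball (c q) (rho q)))\<^sup>2 /
        (\<Sum>q=1..Q. \<Sum>r=1..q. (real (gcd r q) / real r) powr w *
           measure lebesgue (A1m r (torus_ball (c r) (rho r)) \<inter>
              A1m q (torus_ball (c q) ((real r / real q) powr (w / real CARD('n)) * rho q)))))) > 0"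

definition QIA_avg :: "(nat \<Rightarrow> real^'n) \<Rightarrow> (nat \<Rightarrow> real) \<Rightarrow> bool" where
  "QIA_avg c rho \<longleftrightarrow>
     limsup (\<lambda>Q. ereal ((\<Sum>q=1..Q. measure lebesgue (A1m q (torus_ball (c q) (rho q))))\<^sup>2 /
        (\<Sum>q=1..Q. \<Sum>r=1..Q. measure lebesgue (A1m q (torus_ball (c q) (rho q)) \<inter>
              A1m r (torus_ball (c r) (rho r)))))) > 0"

end

theory Submission
  imports Defs
begin


lemma card_int_interval:
  fixes x L :: real
  assumes "0 \<le> L"
  shows "real (card {j::int. x < of_int j \<and> of_int j < x + L}) \<le> L + 1"
proof -
  have sub: "{j::int. x < of_int j \<and> of_int j < x + L} \<subseteq> {\<lceil>x\<rceil>..\<lfloor>x+L\<rfloor>}"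
    by (auto simp: ceiling_le_iff le_floor_iff less_imp_le)
  have "card {j::int. x < of_int j \<and> of_int j < x + L} \<le> card {\<lceil>x\<rceil>..\<lfloor>x+L\<rfloor>}"
    by (rule card_mono[OF _ sub]) simp
  also have "\<dots> = nat (\<lfloor>x+L\<rfloor> - \<lceil>x\<rceil> + 1)" by simp
  finally have c: "real (card {j::int. x < of_int j \<and> of_int j < x + L}) \<le> real (nat (\<lfloor>x+L\<rfloor> - \<lceil>x\<rceil> + 1))"
    by linarith
  have "real_of_int (\<lfloor>x+L\<rfloor> - \<lceil>x\<rceil>) \<le> L"
    using of_int_floor_le[of "x+L"] le_of_int_ceiling[of x] by (simp only: of_int_diff)
  then show ?thesis using c assms by (cases "\<lfloor>x+L\<rfloor> - \<lceil>x\<rceil> + 1 \<ge> 0") auto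
qed

lemma div_eq_dvd_imp_eq:
  fixes x y M :: int
  assumes "M > 0" "M dvd (x - y)" "x div M = y div M"
  shows "x = y"
proof -
  have "x mod M = y mod M" using assms(2) by (simp add: mod_eq_dvd_iff)
  then show ?thesis using assms(3) by (metis div_mult_mod_eq)
qed

lemma one_dim:
  fixes r q :: nat and a b c e :: real
  assumes r1: "r \<ge> 1" and q1: "q \<ge> 1" and a0: "0 < a" and a1: "a \<le> 1" and b0: "0 < b" and b1: "b \<le> 1"
  shows "\<exists>M::real set. finite M \<and>
     real (card M) * (2 * min (a / r) (b / q)) \<le> 32 * a * b + 8 * real (gcd r q) * min (a / r) (b / q) \<and>
     (\<forall>t::real. 0 \<le> t \<and> t \<le> 1 \<and> (\<exists>p::int. \<bar>r * t - c - p\<bar> < a) \<and> (\<exists>p::int. \<bar>q * t - e - p\<bar> < b)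
          \<longrightarrow> (\<exists>\<mu>\<in>M. \<bar>t - \<mu>\<bar> \<le> min (a / r) (b / q)))"
proof -
  define h where "h = min (a / r) (b / q)"
  define d where "d = gcd (int r) (int q)"
  have dpos: "d > 0" using r1 d_def by simp
  have dreal: "real (gcd r q) = real_of_int d" unfolding d_def by (simp flip: gcd_int_def)
  define lo where "lo = \<lceil>-c-1\<rceil>"
  define hi where "hi = \<lfloor>real r - c + 1\<rfloor>"
  define T where "T = q * a + r * b"
  define k0 where "k0 = r * e - q * c"
  define P where "P = {(p::int, p'::int). lo \<le> p \<and> p \<le> hi \<and> \<bar>q * (c + p) - r * (e + p')\<bar> < T}"
  define \<mu> where "\<mu> = (\<lambda>(p::int, p'::int). if a / r \<le> b / q then (c + p) / r else (e + p') / q)"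
  define r' where "r' = int r div d"
  define q' where "q' = int q div d"
  have rr': "int r = r' * d" unfolding r'_def d_def by simp
  have qq': "int q = q' * d" unfolding q'_def d_def by simp
  have "0 < r' * d" using rr' r1 by linarith
  then have r'pos: "r' > 0" using dpos by (simp add: zero_less_mult_iff)
  have cop: "coprime r' q'" unfolding r'_def q'_def d_def
    using div_gcd_coprime[of "int r" "int q"] r1 by simp
  define J where "J = {j::int. (k0 - T) / d < of_int j \<and> of_int j < (k0 - T) / d + 2 * T / d}"
  define K where "K = {0..(hi - lo) div r'}"
  define \<phi> where "\<phi> = (\<lambda>(p::int, p'::int). ((q * p - r * p') div d, (p - lo) div r'))"
  have Tpos: "T > 0" using T_def a0 b0 r1 q1 by (simp add: add_pos_pos)
  have inj: "inj_on \<phi> P"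
  proof (rule inj_onI)
    fix x y assume x: "x \<in> P" and y: "y \<in> P" and eq: "\<phi> x = \<phi> y"
    obtain p1 p1' where xe: "x = (p1, p1')" by (cases x)
    obtain p2 p2' where ye: "y = (p2, p2')" by (cases y)
    have e1: "(q * p1 - r * p1') div d = (q * p2 - r * p2') div d" and e2: "(p1 - lo) div r' = (p2 - lo) div r'"
      using eq xe ye \<phi>_def by auto
    have dv1: "d dvd (q * p1 - r * p1')" "d dvd (q * p2 - r * p2')" unfolding d_def by simp_all
    have "q * p1 - r * p1' = q * p2 - r * p2'"
      using e1 dv1 by (metis dvd_div_mult_self)
    then have "int q * (p1 - p2) = int r * (p1' - p2')" by (simp add: algebra_simps)
    then have "q' * (p1 - p2) * d = r' * (p1' - p2') * d" using rr' qq' by (simp add: algebra_simps)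
    then have "q' * (p1 - p2) = r' * (p1' - p2')" using dpos by simp
    then have "r' dvd q' * (p1 - p2)" by simp
    then have "r' dvd (p1 - p2)" using cop by (simp add: coprime_dvd_mult_right_iff coprime_commute)
    then have "r' dvd ((p1 - lo) - (p2 - lo))" by simp
    then have "p1 - lo = p2 - lo" using div_eq_dvd_imp_eq[OF r'pos _ e2] by simp
    then have p12: "p1 = p2" by simp
    then have "int r * p1' = int r * p2'" using \<open>int q * (p1 - p2) = int r * (p1' - p2')\<close> by (auto simp: algebra_simps)
    then have "p1' = p2'" using r1 by simp
    then show "x = y" using xe ye p12 by simp
  qed
  have img: "\<phi> ` P \<subseteq> J \<times> K"
  proof
    fix z assume "z \<in> \<phi> ` P"
    then obtain p p' where pP: "(p, p') \<in> P" and z: "z = \<phi> (p, p')" by auto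
    have dv: "d dvd (q * p - r * p')" unfolding d_def by simp
    define j where "j = (q * p - r * p') div d"
    have dj0: "d * j = int q * p - int r * p'" unfolding j_def using dv by simp
    have dj: "of_int d * of_int j = real_of_int (q * p - r * p')"
      using arg_cong[OF dj0, of real_of_int] by simp
    have "q * (c + p) - r * (e + p') = real_of_int (q * p - r * p') - k0" unfolding k0_def by (simp add: algebra_simps)
    then have "\<bar>of_int d * of_int j - k0\<bar> < T" using pP P_def dj by auto
    then have "k0 - T < of_int d * of_int j" "of_int d * of_int j < k0 + T" by linarith+
    then have "(k0 - T) / d < of_int j" "of_int j < (k0 + T) / d" using dpos
      by (simp_all add: divide_less_eq less_divide_eq mult.commute)
    then have jJ: "j \<in> J" unfolding J_def by (simp add: add_divide_distrib diff_divide_distrib)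
    have "0 \<le> (p - lo) div r'" "(p - lo) div r' \<le> (hi - lo) div r'" using pP P_def r'pos
      by (auto intro: zdiv_mono1 pos_imp_zdiv_nonneg_iff[THEN iffD2])
    then have "(p - lo) div r' \<in> K" unfolding K_def by simp
    then show "z \<in> J \<times> K" using z jJ \<phi>_def j_def by simp
  qed
  have finJ: "finite J"
  proof -
    have "J \<subseteq> {\<lceil>(k0 - T) / d\<rceil>..\<lfloor>(k0 - T) / d + 2 * T / d\<rfloor>}" unfolding J_def
      by (auto simp: ceiling_le_iff le_floor_iff less_imp_le)
    then show ?thesis using finite_subset by blast
  qed
  have finK: "finite K" unfolding K_def by simp
  have finP: "finite P"
    using finite_imageD[OF finite_subset[OF img] inj] finJ finK by blast
  have cardJ: "real (card J) \<le> 2 * T / d + 1"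
    unfolding J_def by (rule card_int_interval) (use Tpos dpos in simp)
  have hilo: "real_of_int (hi - lo) \<le> real r + 2"
    using of_int_floor_le[of "real r - c + 1"] le_of_int_ceiling[of "-c-1"] unfolding hi_def lo_def by (simp only: of_int_diff; linarith)
  have cardK: "real (card K) \<le> 4 * d"
  proof (cases "0 \<le> (hi - lo) div r'")
    case True
    have "card K = nat ((hi - lo) div r' + 1)" unfolding K_def by simp
    then have ck: "real (card K) = real_of_int ((hi - lo) div r') + 1" using True by simp
    have "real_of_int ((hi - lo) div r') \<le> real_of_int (hi - lo) / real_of_int r'"
      by (rule real_of_int_div4)
    also have "\<dots> \<le> (real r + 2) / real_of_int r'"
      using hilo r'pos by (simp add: divide_right_mono)
    also have "\<dots> = d * (real r + 2) / real r"
    proof -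
      have "real r = real_of_int r' * real_of_int d" using rr' by (metis of_int_mult of_int_of_nat_eq)
      then show ?thesis using dpos r'pos by (simp add: field_simps)
    qed
    also have "\<dots> \<le> 3 * d"
    proof -
      have "real r + 2 \<le> 3 * real r" using r1 by simp
      then have "d * (real r + 2) \<le> d * (3 * real r)" using dpos by (simp add: mult_left_mono)
      then show ?thesis using r1 by (simp add: divide_le_eq)
    qed
    finally show ?thesis using ck dpos by linarith
  next
    case False
    then have "K = {}" unfolding K_def by simp
    then show ?thesis using dpos by simp
  qed
  have "card P \<le> card (J \<times> K)"
    using card_inj_on_le[OF inj img] finJ finK by simp
  then have "real (card P) \<le> real (card J) * real (card K)"
    by (metis card_cartesian_product of_nat_le_iff of_nat_mult)
  also have "\<dots> \<le> (2 * T / d + 1) * (4 * d)"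
    using cardJ cardK by (intro mult_mono) auto
  also have "\<dots> = 8 * T + 4 * d" using dpos by (simp add: field_simps)
  finally have cardP: "real (card P) \<le> 8 * T + 4 * d" .
  define M where "M = \<mu> ` P"
  have finM: "finite M" unfolding M_def using finP by simp
  have hpos: "h \<ge> 0" unfolding h_def using a0 b0 by simp
  have Th: "T * h \<le> 2 * a * b"
  proof -
    have "q * a * h \<le> q * a * (b / q)" unfolding h_def using a0 q1 by (intro mult_left_mono) auto
    moreover have "r * b * h \<le> r * b * (a / r)" unfolding h_def using b0 r1 by (intro mult_left_mono) auto
    moreover have "q * a * (b / q) = a * b" "r * b * (a / r) = a * b" using r1 q1 by simp_all
    moreover have "T * h = q * a * h + r * b * h" unfolding T_def by (simp add: algebra_simps)
    ultimately show ?thesis by linarith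
  qed
  have "real (card M) * (2 * h) \<le> real (card P) * (2 * h)"
    unfolding M_def using card_image_le[OF finP, of \<mu>] hpos by (simp add: mult_right_mono)
  also have "\<dots> \<le> (8 * T + 4 * d) * (2 * h)" using cardP hpos by (simp add: mult_right_mono)
  also have "\<dots> = 16 * (T * h) + 8 * d * h" by (simp add: algebra_simps)
  also have "\<dots> \<le> 32 * a * b + 8 * d * h" using Th by simp
  finally have cardM: "real (card M) * (2 * h) \<le> 32 * a * b + 8 * real (gcd r q) * h" using dreal by simp
  have cover: "\<exists>\<mu>'\<in>M. \<bar>t - \<mu>'\<bar> \<le> h"
    if t: "0 \<le> t" "t \<le> 1" and p: "\<bar>r * t - c - p\<bar> < a" and p': "\<bar>q * t - e - p'\<bar> < b" for t :: real and p p' :: int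
  proof -
    have "lo \<le> p"
    proof -
      have "-c - 1 < of_int p" using p a1 t r1
        by (smt (verit) of_nat_0_le_iff zero_le_mult_iff)
      then show ?thesis unfolding lo_def ceiling_le_iff by linarith
    qed
    moreover have "p \<le> hi"
    proof -
      have "r * t \<le> r" using t by (simp add: mult_left_le)
      then have "of_int p < real r - c + 1" using p a1 by linarith
      then show ?thesis unfolding hi_def le_floor_iff by linarith
    qed
    moreover have "\<bar>q * (c + p) - r * (e + p')\<bar> < T"
    proof -
      have eq: "q * (c + p) - r * (e + p') = r * (q * t - e - p') - q * (r * t - c - p)" by (simp add: algebra_simps)
      have "\<bar>r * (q * t - e - p')\<bar> < r * b" using p' r1 by (simp add: abs_mult)
      moreover have "\<bar>q * (r * t - c - p)\<bar> < q * a" using p q1 by (simp add: abs_mult)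
      ultimately show ?thesis unfolding eq T_def by linarith
    qed
    ultimately have inP: "(p, p') \<in> P" unfolding P_def by simp
    have "\<bar>t - \<mu> (p, p')\<bar> \<le> h"
    proof (cases "a / r \<le> b / q")
      case True
      have "t - (c + p) / r = (r * t - c - p) / r" using r1 by (simp add: field_simps)
      then have "\<bar>t - (c + p) / r\<bar> = \<bar>r * t - c - p\<bar> / r" by simp
      also have "\<dots> \<le> a / r" using p r1 by (simp add: divide_right_mono)
      finally show ?thesis using True unfolding \<mu>_def h_def by simp
    next
      case False
      have "t - (e + p') / q = (q * t - e - p') / q" using q1 by (simp add: field_simps)
      then have "\<bar>t - (e + p') / q\<bar> = \<bar>q * t - e - p'\<bar> / q" by simp
      also have "\<dots> \<le> b / q" using p' q1 by (simp add: divide_right_mono)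
      finally show ?thesis using False unfolding \<mu>_def h_def by simp
    qed
    then show ?thesis using inP M_def by blast
  qed
  show ?thesis
  proof (intro exI[of _ M] conjI allI impI)
    show "finite M" by (rule finM)
    show "real (card M) * (2 * min (a / r) (b / q)) \<le> 32 * a * b + 8 * real (gcd r q) * min (a / r) (b / q)"
      using cardM unfolding h_def .
  next
    fix t :: real assume "0 \<le> t \<and> t \<le> 1 \<and> (\<exists>p::int. \<bar>r * t - c - p\<bar> < a) \<and> (\<exists>p::int. \<bar>q * t - e - p\<bar> < b)"
    then show "\<exists>\<mu>\<in>M. \<bar>t - \<mu>\<bar> \<le> min (a / r) (b / q)" using cover unfolding h_def by blast
  qed
qed



lemma measure_le_lmeasurable:
  assumes "X \<subseteq> Y" "Y \<in> lmeasurable"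
  shows "measure lebesgue X \<le> measure lebesgue Y"
proof (cases "X \<in> sets lebesgue")
  case True then show ?thesis using measure_mono_fmeasurable assms by blast
next
  case False then show ?thesis by (simp add: measure_notin_sets)
qed

lemma exists_int_min1:
  fixes y \<rho> :: real
  assumes "\<exists>P::int. \<bar>y - P\<bar> < \<rho>"
  shows "\<exists>P::int. \<bar>y - P\<bar> < min \<rho> 1"
proof (cases "\<rho> \<le> 1")
  case True then show ?thesis using assms by simp
next
  case False
  have "\<bar>y - of_int (round y)\<bar> \<le> 1/2" using of_int_round_abs_le[of y] by (simp add: abs_minus_commute)
  then show ?thesis using False by (intro exI[of _ "round y"]) simp
qed

lemma A1m_coord:
  fixes x c :: "real^'n"
  assumes "x \<in> A1m r (torus_ball c \<rho>)"
  shows "0 \<le> x$i \<and> x$i \<le> 1 \<and> (\<exists>P::int. \<bar>r * x$i - c$i - P\<bar> < \<rho>)"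
proof -
  obtain p :: "int^'n" where x: "x \<in> unit_cube" and p: "real r *\<^sub>R x + (\<chi> i. of_int (p$i)) \<in> torus_ball c \<rho>"
    using assms unfolding A1m_def by blast
  obtain P :: "int^'n" where P: "\<And>i. \<bar>(real r *\<^sub>R x + (\<chi> i. of_int (p$i)))$i - c$i - of_int (P$i)\<bar> < \<rho>"
    using p unfolding torus_ball_def by blast
  have "\<bar>r * x$i - c$i - of_int (P$i - p$i)\<bar> < \<rho>" using P[of i] by (simp add: algebra_simps)
  then show ?thesis using x unfolding unit_cube_def by blast
qed

lemma inter_bound:
  fixes c1 c2 :: "real^'n" and r q :: nat and \<rho> \<sigma> :: real
  assumes r1: "r \<ge> 1" and q1: "q \<ge> 1" and rho: "\<rho> > 0" and sig: "\<sigma> > 0"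
  shows "measure lebesgue (A1m r (torus_ball c1 \<rho>) \<inter> A1m q (torus_ball c2 \<sigma>))
     \<le> (32 * min \<rho> 1 * min \<sigma> 1 + 8 * real (gcd r q) * min (min \<rho> 1 / r) (min \<sigma> 1 / q)) ^ CARD('n)"
proof -
  define a where "a = min \<rho> 1"
  define b where "b = min \<sigma> 1"
  define h where "h = min (a / r) (b / q)"
  define B where "B = 32 * a * b + 8 * real (gcd r q) * h"
  have a0: "0 < a" "a \<le> 1" and b0: "0 < b" "b \<le> 1" using rho sig a_def b_def by auto
  have hpos: "h \<ge> 0" using a0 b0 h_def by simp
  have "\<forall>i. \<exists>M::real set. finite M \<and> real (card M) * (2 * h) \<le> B \<and>
     (\<forall>t::real. 0 \<le> t \<and> t \<le> 1 \<and> (\<exists>p::int. \<bar>r * t - c1$i - p\<bar> < a) \<and> (\<exists>p::int. \<bar>q * t - c2$i - p\<bar> < b)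
          \<longrightarrow> (\<exists>\<mu>\<in>M. \<bar>t - \<mu>\<bar> \<le> h))"
    using one_dim[OF r1 q1 a0 b0] unfolding B_def h_def by blast
  then obtain M :: "'n \<Rightarrow> real set" where M: "\<And>i. finite (M i)" "\<And>i. real (card (M i)) * (2 * h) \<le> B"
     "\<And>i (t::real). 0 \<le> t \<Longrightarrow> t \<le> 1 \<Longrightarrow> (\<exists>p::int. \<bar>r * t - c1$i - p\<bar> < a) \<Longrightarrow> (\<exists>p::int. \<bar>q * t - c2$i - p\<bar> < b)
          \<Longrightarrow> (\<exists>\<mu>\<in>M i. \<bar>t - \<mu>\<bar> \<le> h)"
    by metis
  define F where "F = PiE UNIV M"
  define bx where "bx = (\<lambda>f::'n \<Rightarrow> real. cbox (\<chi> i. f i - h) (\<chi> i. f i + h))"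
  have finF: "finite F" unfolding F_def using M(1) by (simp add: finite_PiE)
  have sub: "A1m r (torus_ball c1 \<rho>) \<inter> A1m q (torus_ball c2 \<sigma>) \<subseteq> (\<Union>f\<in>F. bx f)"
  proof
    fix x assume x: "x \<in> A1m r (torus_ball c1 \<rho>) \<inter> A1m q (torus_ball c2 \<sigma>)"
    have "\<forall>i. \<exists>\<mu>\<in>M i. \<bar>x$i - \<mu>\<bar> \<le> h"
    proof
      fix i
      have h1: "0 \<le> x$i \<and> x$i \<le> 1 \<and> (\<exists>P::int. \<bar>r * x$i - c1$i - P\<bar> < \<rho>)"
        using x A1m_coord by blast
      have h2: "\<exists>P::int. \<bar>q * x$i - c2$i - P\<bar> < \<sigma>"
        using x A1m_coord by blast
      have h1': "\<exists>P::int. \<bar>r * x$i - c1$i - P\<bar> < a"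
        using h1 exists_int_min1[of "real r * x$i - c1$i" \<rho>] unfolding a_def by (simp add: algebra_simps)
      have h2': "\<exists>P::int. \<bar>q * x$i - c2$i - P\<bar> < b"
        using h2 exists_int_min1[of "real q * x$i - c2$i" \<sigma>] unfolding b_def by (simp add: algebra_simps)
      show "\<exists>\<mu>\<in>M i. \<bar>x$i - \<mu>\<bar> \<le> h" using M(3)[of "x$i" i] h1 h1' h2' by blast
    qed
    then obtain f where f: "\<And>i. f i \<in> M i" "\<And>i. \<bar>x$i - f i\<bar> \<le> h" by metis
    have "f i - h \<le> x$i \<and> x$i \<le> f i + h" for i
      using f(2)[of i] abs_le_iff[of "x$i - f i" h] by linarith
    then have "x \<in> bx f" unfolding bx_def mem_box_cart by simp
    moreover have "f \<in> F" unfolding F_def using f(1) by auto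
    ultimately show "x \<in> (\<Union>f\<in>F. bx f)" by blast
  qed
  have meas: "bx f \<in> lmeasurable" for f unfolding bx_def by simp
  have mbx: "measure lebesgue (bx f) = (2 * h) ^ CARD('n)" for f
  proof -
    have "cbox (\<chi> i. f i - h) (\<chi> i. f i + h) \<noteq> {}" using hpos by (auto simp: interval_ne_empty_cart)
    then show ?thesis unfolding bx_def by (simp add: content_cbox_cart)
  qed
  have "measure lebesgue (A1m r (torus_ball c1 \<rho>) \<inter> A1m q (torus_ball c2 \<sigma>)) \<le> measure lebesgue (\<Union>f\<in>F. bx f)"
    by (rule measure_le_lmeasurable[OF sub]) (use finF meas in \<open>intro fmeasurable.finite_UN\<close>)
  also have "\<dots> \<le> (\<Sum>f\<in>F. measure lebesgue (bx f))"
    using finF meas by (intro measure_UNION_le) auto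
  also have "\<dots> = real (card F) * (2 * h) ^ CARD('n)" using mbx by simp
  also have "real (card F) = (\<Prod>i\<in>UNIV. real (card (M i)))" unfolding F_def by (simp add: card_PiE)
  also have "(\<Prod>i\<in>UNIV. real (card (M i))) * (2 * h) ^ CARD('n) = (\<Prod>i\<in>UNIV. real (card (M i)) * (2 * h))"
    by (simp add: prod.distrib)
  also have "\<dots> \<le> (\<Prod>i\<in>(UNIV::'n set). B)"
    by (rule prod_mono) (use M(2) hpos in auto)
  also have "\<dots> = B ^ CARD('n)" by simp
  finally show ?thesis unfolding B_def h_def a_def b_def .
qed



lemma unit_cube_cbox: "unit_cube = cbox (0::real^'n) 1"
  unfolding unit_cube_def by (auto simp: mem_box_cart)

lemma open_A1m_part:
  "open {x::real^'n. \<exists>p::int^'n. (real r *\<^sub>R x + (\<chi> i. of_int (p$i))) \<in> torus_ball c \<rho>}"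
proof -
  have eq: "{x::real^'n. \<exists>p::int^'n. (real r *\<^sub>R x + (\<chi> i. of_int (p$i))) \<in> torus_ball c \<rho>}
     = {x. \<exists>p::int^'n. \<exists>P::int^'n. \<forall>i. \<bar>real r * x$i + of_int (p$i) - c$i - of_int (P$i)\<bar> < \<rho>}"
    unfolding torus_ball_def by simp
  have "open {x::real^'n. \<forall>i. \<bar>real r * x$i + of_int (p$i) - c$i - of_int (P$i)\<bar> < \<rho>}" for p P :: "int^'n"
  proof -
    have "open {t. \<bar>real r * t + of_int (p$i) - c$i - of_int (P$i)\<bar> < \<rho>}" for i
      by (intro open_Collect_less continuous_intros)
    then have "open {x::real^'n. \<forall>i. x$i \<in> {t. \<bar>real r * t + of_int (p$i) - c$i - of_int (P$i)\<bar> < \<rho>}}"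
      by (intro open_vector_box) blast
    then show ?thesis by simp
  qed
  then show ?thesis unfolding eq by (intro open_Collect_ex)
qed

lemma A1m_lmeasurable: "A1m r (torus_ball (c::real^'n) \<rho>) \<in> lmeasurable"
proof -
  have eq: "A1m r (torus_ball c \<rho>) = unit_cube \<inter> {x::real^'n. \<exists>p::int^'n. (real r *\<^sub>R x + (\<chi> i. of_int (p$i))) \<in> torus_ball c \<rho>}"
    unfolding A1m_def by auto
  have meas: "A1m r (torus_ball c \<rho>) \<in> sets lebesgue"
    unfolding eq unit_cube_cbox
  proof (rule sets.Int)
    show "cbox (0::real^'n) 1 \<in> sets lebesgue" by (rule fmeasurableD) simp
    show "{x::real^'n. \<exists>p::int^'n. (real r *\<^sub>R x + (\<chi> i. of_int (p$i))) \<in> torus_ball c \<rho>} \<in> sets lebesgue"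
      using borel_open[OF open_A1m_part] by (intro sets_completionI_sets) simp
  qed
  have sub: "A1m r (torus_ball c \<rho>) \<subseteq> cbox 0 1" unfolding A1m_def unit_cube_cbox by (rule Collect_subset)
  show ?thesis by (rule fmeasurableI2[OF _ sub meas]) simp
qed



lemma coord_facts:
  fixes c' t h0 \<delta> :: real and p r :: nat
  assumes c': "0 \<le> c'" "c' < 1" and h0: "0 < h0" "h0 \<le> 1/4"
    and \<delta>: "\<delta> = (if c' \<le> 1/2 then 0 else -h0)" and pr: "p < r"
    and t: "(c' + p + \<delta>) / r \<le> t" "t \<le> (c' + p + \<delta> + h0) / r"
  shows "0 \<le> t \<and> t < 1 \<and> \<bar>r * t - c' - p\<bar> \<le> h0"
proof -
  have rpos: "real r > 0" using pr by simp
  have t1: "c' + p + \<delta> \<le> r * t" using t(1) rpos by (simp add: divide_le_eq mult.commute)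
  have t2: "r * t \<le> c' + p + \<delta> + h0" using t(2) rpos by (simp add: le_divide_eq mult.commute)
  have pr': "real p + 1 \<le> real r" using pr by linarith
  have "0 \<le> c' + p + \<delta>" using c' h0 \<delta> by (cases "c' \<le> 1/2") auto
  then have "0 \<le> r * t" using t1 by linarith
  then have "0 \<le> t" using rpos by (simp add: zero_le_mult_iff)
  moreover have "c' + p + \<delta> + h0 < r" using c' h0 \<delta> pr' by (cases "c' \<le> 1/2") auto
  then have "r * t < r * 1" using t2 by linarith
  then have "t < 1" using rpos by simp
  moreover have "\<bar>r * t - c' - p\<bar> \<le> h0" using t1 t2 \<delta> h0 by (cases "c' \<le> 1/2") auto
  ultimately show ?thesis by blast
qed

lemma boxes_lower:
  fixes c :: "real^'n" and r :: nat and \<rho> :: real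
  assumes r1: "r \<ge> 1" and rho: "\<rho> > 0"
  shows "\<exists>(bx :: ('n \<Rightarrow> nat) \<Rightarrow> (real^'n) set) (I :: ('n \<Rightarrow> nat) set).
    finite I \<and> disjoint_family_on bx I \<and>
    (\<forall>p\<in>I. bx p \<subseteq> {x. (\<forall>i. 0 \<le> x$i \<and> x$i < 1) \<and> (\<forall>i. \<exists>P::int. \<bar>r * x$i - c$i - P\<bar> < \<rho>)}) \<and>
    (\<forall>p. bx p \<in> lmeasurable) \<and>
    (\<Sum>p\<in>I. measure lebesgue (bx p)) \<ge> (min \<rho> 1 / 4) ^ CARD('n)"
proof -
  define h0 where "h0 = min \<rho> (1/2) / 2"
  define c' where "c' = (\<lambda>i. c$i - of_int \<lfloor>c$i\<rfloor>)"
  define \<delta> where "\<delta> = (\<lambda>i. if c' i \<le> 1/2 then 0 else -h0)"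
  define bx where "bx = (\<lambda>p::'n\<Rightarrow>nat. cbox (\<chi> i. (c' i + p i + \<delta> i) / r) (\<chi> i. (c' i + p i + \<delta> i + h0) / r))"
  define I where "I = PiE (UNIV::'n set) (\<lambda>_. {..<r})"
  have h0: "0 < h0" "h0 \<le> 1/4" "h0 < \<rho>" using rho h0_def by auto
  have c'i: "0 \<le> c' i" "c' i < 1" for i unfolding c'_def
    by (simp_all add: floor_le_iff) linarith
  have rpos: "real r > 0" using r1 by simp
  have fin: "finite I" unfolding I_def by (simp add: finite_PiE)
  have mem: "(c' i + p i + \<delta> i) / r \<le> x$i \<and> x$i \<le> (c' i + p i + \<delta> i + h0) / r" if "x \<in> bx p" for x p i
    using that unfolding bx_def mem_box_cart by simp
  have disj: "disjoint_family_on bx I"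
  proof (unfold disjoint_family_on_def, intro ballI impI)
    fix p p' assume "p \<in> I" "p' \<in> I" "p \<noteq> p'"
    then obtain i where i: "p i \<noteq> p' i" by blast
    show "bx p \<inter> bx p' = {}"
    proof (rule ccontr)
      assume "bx p \<inter> bx p' \<noteq> {}"
      then obtain x where x: "x \<in> bx p" "x \<in> bx p'" by blast
      have a: "(c' i + p i + \<delta> i) \<le> r * x$i" "r * x$i \<le> (c' i + p i + \<delta> i + h0)"
        using mem[OF x(1), of i] rpos by (simp_all add: divide_le_eq le_divide_eq mult.commute)
      have b: "(c' i + p' i + \<delta> i) \<le> r * x$i" "r * x$i \<le> (c' i + p' i + \<delta> i + h0)"
        using mem[OF x(2), of i] rpos by (simp_all add: divide_le_eq le_divide_eq mult.commute)
      have "\<bar>real (p i) - real (p' i)\<bar> \<le> h0" using a b by linarith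
      moreover have "\<bar>real (p i) - real (p' i)\<bar> \<ge> 1" using i by linarith
      ultimately show False using h0 by linarith
    qed
  qed
  have sub: "bx p \<subseteq> {x. (\<forall>i. 0 \<le> x$i \<and> x$i < 1) \<and> (\<forall>i. \<exists>P::int. \<bar>r * x$i - c$i - P\<bar> < \<rho>)}"
    if p: "p \<in> I" for p
  proof
    fix x assume x: "x \<in> bx p"
    have cf: "0 \<le> x$i \<and> x$i < 1 \<and> \<bar>r * x$i - c' i - p i\<bar> \<le> h0" for i
    proof (rule coord_facts[OF c'i h0(1,2)])
      show "\<delta> i = (if c' i \<le> 1/2 then 0 else -h0)" unfolding \<delta>_def ..
      show "p i < r" using p unfolding I_def by auto
    qed (use mem[OF x, of i] in auto)
    have "\<exists>P::int. \<bar>r * x$i - c$i - P\<bar> < \<rho>" for i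
    proof (intro exI[of _ "int (p i) - \<lfloor>c$i\<rfloor>"])
      have eq: "r * x$i - c$i - of_int (int (p i) - \<lfloor>c$i\<rfloor>) = r * x$i - c' i - p i" unfolding c'_def by simp
      show "\<bar>r * x$i - c$i - of_int (int (p i) - \<lfloor>c$i\<rfloor>)\<bar> < \<rho>" unfolding eq using cf[of i] h0 by linarith
    qed
    then show "x \<in> {x. (\<forall>i. 0 \<le> x$i \<and> x$i < 1) \<and> (\<forall>i. \<exists>P::int. \<bar>r * x$i - c$i - P\<bar> < \<rho>)}"
      using cf by blast
  qed
  have lm: "bx p \<in> lmeasurable" for p unfolding bx_def by simp
  have mb: "measure lebesgue (bx p) = (h0 / r) ^ CARD('n)" for p
  proof -
    have "cbox (\<chi> i. (c' i + p i + \<delta> i) / r) (\<chi> i. (c' i + p i + \<delta> i + h0) / r) \<noteq> {}"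
      using h0 rpos by (auto simp: interval_ne_empty_cart divide_right_mono)
    moreover have "(c' i + p i + \<delta> i + h0) / r - (c' i + p i + \<delta> i) / r = h0 / r" for i
      by (simp add: diff_divide_distrib[symmetric])
    ultimately show ?thesis unfolding bx_def by (simp add: content_cbox_cart)
  qed
  have "(\<Sum>p\<in>I. measure lebesgue (bx p)) = real (card I) * (h0 / r) ^ CARD('n)" using mb by simp
  also have "real (card I) = real r ^ CARD('n)" unfolding I_def by (simp add: card_PiE)
  also have "real r ^ CARD('n) * (h0 / r) ^ CARD('n) = h0 ^ CARD('n)"
    using rpos by (simp add: power_mult_distrib[symmetric])
  also have "h0 ^ CARD('n) \<ge> (min \<rho> 1 / 4) ^ CARD('n)"
    using rho unfolding h0_def by (intro power_mono) auto
  finally have "(\<Sum>p\<in>I. measure lebesgue (bx p)) \<ge> (min \<rho> 1 / 4) ^ CARD('n)" .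
  then show ?thesis using fin disj sub lm by (intro exI[of _ bx] exI[of _ I] conjI ballI allI)
qed



lemma choose_int_vec:
  assumes "\<forall>i. \<exists>P::int. Q i P"
  shows "\<exists>P::int^'n. \<forall>i. Q i (P$i)"
proof -
  obtain f where "\<forall>i. Q i (f i)" using assms by metis
  then show ?thesis by (intro exI[of _ "\<chi> i. f i"]) simp
qed

lemma A1m_lower:
  fixes c :: "real^'n" and r :: nat and \<rho> :: real
  assumes r1: "r \<ge> 1" and rho: "\<rho> > 0"
  shows "measure lebesgue (A1m r (torus_ball c \<rho>)) \<ge> (min \<rho> 1 / 4) ^ CARD('n)"
proof -
  obtain bx :: "('n \<Rightarrow> nat) \<Rightarrow> (real^'n) set" and I where bI:
    "finite I" "disjoint_family_on bx I"
    "\<And>p. p \<in> I \<Longrightarrow> bx p \<subseteq> {x. (\<forall>i. 0 \<le> x$i \<and> x$i < 1) \<and> (\<forall>i. \<exists>P::int. \<bar>r * x$i - c$i - P\<bar> < \<rho>)}"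
    "\<And>p. bx p \<in> lmeasurable"
    "(\<Sum>p\<in>I. measure lebesgue (bx p)) \<ge> (min \<rho> 1 / 4) ^ CARD('n)"
    using boxes_lower[OF r1 rho, of c] by (elim exE conjE) blast
  have sub: "(\<Union>p\<in>I. bx p) \<subseteq> A1m r (torus_ball c \<rho>)"
  proof
    fix x assume "x \<in> (\<Union>p\<in>I. bx p)"
    then have x: "\<forall>i. 0 \<le> x$i \<and> x$i < 1" "\<forall>i. \<exists>P::int. \<bar>r * x$i - c$i - P\<bar> < \<rho>" using bI(3) by blast+
    obtain P :: "int^'n" where P: "\<forall>i. \<bar>r * x$i - c$i - P$i\<bar> < \<rho>" using choose_int_vec[OF x(2)] by blast
    have "real r *\<^sub>R x + (\<chi> i. of_int ((0::int^'n)$i)) \<in> torus_ball c \<rho>"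
      unfolding torus_ball_def using P by fastforce
    moreover have "x \<in> unit_cube" unfolding unit_cube_def using x(1) by (simp add: less_imp_le)
    ultimately show "x \<in> A1m r (torus_ball c \<rho>)" unfolding A1m_def by blast
  qed
  have "measure lebesgue (\<Union>p\<in>I. bx p) = (\<Sum>p\<in>I. measure lebesgue (bx p))"
  proof (rule measure_finite_Union)
    show "finite I" by (rule bI(1))
    show "bx ` I \<subseteq> sets lebesgue" using bI(4) by blast
    show "disjoint_family_on bx I" by (rule bI(2))
    show "emeasure lebesgue (bx p) \<noteq> \<infinity>" for p using fmeasurableD2[OF bI(4)[of p]] by simp
  qed
  moreover have "measure lebesgue (\<Union>p\<in>I. bx p) \<le> measure lebesgue (A1m r (torus_ball c \<rho>))"
    by (rule measure_mono_fmeasurable[OF sub _ A1m_lmeasurable]) (use bI(1,4) in \<open>intro sets.finite_UN fmeasurableD\<close>)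
  ultimately show ?thesis using bI(5) by linarith
qed

lemma open_torus_ball: "open (torus_ball (c::real^'n) \<rho>)"
proof -
  have eq: "torus_ball c \<rho> = {x. \<exists>P::int^'n. \<forall>i. x$i \<in> {t. \<bar>t - c$i - of_int (P$i)\<bar> < \<rho>}}"
    unfolding torus_ball_def by simp
  have "open {t. \<bar>t - c$i - of_int (P$i)\<bar> < \<rho>}" for i and P :: "int^'n"
    by (intro open_Collect_less continuous_intros)
  then have "open {x::real^'n. \<forall>i. x$i \<in> {t. \<bar>t - c$i - of_int (P$i)\<bar> < \<rho>}}" for P :: "int^'n"
    by (intro open_vector_box) blast
  then show ?thesis unfolding eq by (intro open_Collect_ex)
qed

lemma torus_part_lmeasurable: "torus_ball (c::real^'n) \<rho> \<inter> {x. \<forall>i. 0 \<le> x$i \<and> x$i < 1} \<in> lmeasurable"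
proof -
  have m1: "torus_ball c \<rho> \<in> sets lebesgue"
    using borel_open[OF open_torus_ball] by (intro sets_completionI_sets) simp
  have "{x::real^'n. \<forall>i. 0 \<le> x$i \<and> x$i < 1} \<in> sets borel" by measurable
  then have m2: "{x::real^'n. \<forall>i. 0 \<le> x$i \<and> x$i < 1} \<in> sets lebesgue"
    by (intro sets_completionI_sets) simp
  have sub: "torus_ball c \<rho> \<inter> {x. \<forall>i. 0 \<le> x$i \<and> x$i < 1} \<subseteq> cbox 0 1"
    by (auto simp: mem_box_cart less_imp_le)
  show ?thesis by (rule fmeasurableI2[OF _ sub sets.Int[OF m1 m2]]) simp
qed

lemma torus_vol_lower:
  fixes c :: "real^'n" and \<rho> :: real
  assumes rho: "\<rho> > 0"
  shows "torus_vol (torus_ball c \<rho>) \<ge> (min \<rho> 1 / 4) ^ CARD('n)"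
proof -
  have r1: "(1::nat) \<ge> 1" by simp
  obtain bx :: "('n \<Rightarrow> nat) \<Rightarrow> (real^'n) set" and I where bI:
    "finite I" "disjoint_family_on bx I"
    "\<And>p. p \<in> I \<Longrightarrow> bx p \<subseteq> {x. (\<forall>i. 0 \<le> x$i \<and> x$i < 1) \<and> (\<forall>i. \<exists>P::int. \<bar>real (1::nat) * x$i - c$i - P\<bar> < \<rho>)}"
    "\<And>p. bx p \<in> lmeasurable"
    "(\<Sum>p\<in>I. measure lebesgue (bx p)) \<ge> (min \<rho> 1 / 4) ^ CARD('n)"
    using boxes_lower[OF r1 rho, of c] by (elim exE conjE) blast
  have sub: "(\<Union>p\<in>I. bx p) \<subseteq> torus_ball c \<rho> \<inter> {x. \<forall>i. 0 \<le> x$i \<and> x$i < 1}"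
  proof
    fix x assume "x \<in> (\<Union>p\<in>I. bx p)"
    then have x: "\<forall>i. 0 \<le> x$i \<and> x$i < 1" "\<forall>i. \<exists>P::int. \<bar>x$i - c$i - P\<bar> < \<rho>" using bI(3) by fastforce+
    obtain P :: "int^'n" where P: "\<forall>i. \<bar>x$i - c$i - P$i\<bar> < \<rho>" using choose_int_vec[OF x(2)] by blast
    show "x \<in> torus_ball c \<rho> \<inter> {x. \<forall>i. 0 \<le> x$i \<and> x$i < 1}"
      unfolding torus_ball_def using P x(1) by blast
  qed
  have "measure lebesgue (\<Union>p\<in>I. bx p) = (\<Sum>p\<in>I. measure lebesgue (bx p))"
  proof (rule measure_finite_Union)
    show "finite I" by (rule bI(1))
    show "bx ` I \<subseteq> sets lebesgue" using bI(4) by blast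
    show "disjoint_family_on bx I" by (rule bI(2))
    show "emeasure lebesgue (bx p) \<noteq> \<infinity>" for p using fmeasurableD2[OF bI(4)[of p]] by simp
  qed
  moreover have "measure lebesgue (\<Union>p\<in>I. bx p) \<le> torus_vol (torus_ball c \<rho>)"
    unfolding torus_vol_def
    by (rule measure_mono_fmeasurable[OF sub _ torus_part_lmeasurable]) (use bI(1,4) in \<open>intro sets.finite_UN fmeasurableD\<close>)
  ultimately show ?thesis using bI(5) by linarith
qed

lemma torus_vol_upper:
  fixes c :: "real^'n" and \<rho> :: real
  assumes rho: "\<rho> > 0"
  shows "torus_vol (torus_ball c \<rho>) \<le> 40 ^ CARD('n) * (min \<rho> 1) ^ CARD('n)"
proof -
  have sub: "torus_ball c \<rho> \<inter> {x. \<forall>i. 0 \<le> x$i \<and> x$i < 1} \<subseteq> A1m 1 (torus_ball c \<rho>) \<inter> A1m 1 (torus_ball c \<rho>)"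
  proof
    fix x assume x: "x \<in> torus_ball c \<rho> \<inter> {x. \<forall>i. 0 \<le> x$i \<and> x$i < 1}"
    have "real 1 *\<^sub>R x + (\<chi> i. of_int ((0::int^'n)$i)) \<in> torus_ball c \<rho>" using x by (simp add: zero_vec_def[symmetric])
    moreover have "x \<in> unit_cube" unfolding unit_cube_def using x by (simp add: less_imp_le)
    ultimately show "x \<in> A1m 1 (torus_ball c \<rho>) \<inter> A1m 1 (torus_ball c \<rho>)" unfolding A1m_def by blast
  qed
  have "torus_vol (torus_ball c \<rho>) \<le> measure lebesgue (A1m 1 (torus_ball c \<rho>) \<inter> A1m 1 (torus_ball c \<rho>))"
    unfolding torus_vol_def by (rule measure_le_lmeasurable[OF sub]) (simp add: A1m_lmeasurable)
  also have "\<dots> \<le> (32 * min \<rho> 1 * min \<rho> 1 + 8 * real (gcd 1 1) * min (min \<rho> 1 / real 1) (min \<rho> 1 / real 1)) ^ CARD('n)"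
    by (rule inter_bound) (use rho in auto)
  also have "\<dots> \<le> (40 * min \<rho> 1) ^ CARD('n)"
  proof (rule power_mono)
    have "min \<rho> 1 * min \<rho> 1 \<le> min \<rho> 1" using rho by (simp add: mult_le_cancel_left1 min_def)
    then show "32 * min \<rho> 1 * min \<rho> 1 + 8 * real (gcd 1 1) * min (min \<rho> 1 / real 1) (min \<rho> 1 / real 1) \<le> 40 * min \<rho> 1"
      by simp
    show "0 \<le> 32 * min \<rho> 1 * min \<rho> 1 + 8 * real (gcd 1 1) * min (min \<rho> 1 / real 1) (min \<rho> 1 / real 1)"
      using rho by simp
  qed
  finally show ?thesis by (simp add: power_mult_distrib)
qed



definition kern :: "nat \<Rightarrow> nat \<Rightarrow> real" where
  "kern r q = (real (gcd r q) ^ 2 / (real r * real q)) powr (3/2)"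

lemma ident2:
  fixes d r q w :: real and m :: nat
  assumes "d > 0" "r > 0" "q > 0"
  shows "(d / r) powr w * d powr m * ((r / q) powr w / (r * q) powr m) powr (1/2) = (d^2 / (r * q)) powr ((real m + w) / 2)"
  using assms by (simp add: powr_def ln_div ln_mult exp_add[symmetric] ln_realpow algebra_simps exp_diff[symmetric] divide_simps)

lemma ident:
  fixes d r q w :: real and m :: nat
  assumes "d > 0" "r > 0" "q > 0"
  shows "(d / r) powr w * d ^ m * sqrt ((r / q) powr w / (r * q) ^ m) = (d^2 / (r * q)) powr ((real m + w) / 2)"
proof -
  have "d ^ m = d powr m" using assms by (simp add: powr_realpow)
  moreover have "(r * q) ^ m = (r * q) powr m" using assms by (simp add: powr_realpow)
  moreover have "sqrt ((r / q) powr w / (r * q) powr m) = ((r / q) powr w / (r * q) powr m) powr (1/2)"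
    by (simp add: powr_half_sqrt)
  ultimately show ?thesis using ident2[OF assms, of w m] by simp
qed

lemma pow_sum_le:
  fixes x y :: real
  assumes "0 \<le> x" "0 \<le> y"
  shows "(x + y) ^ m \<le> 2 ^ m * (x ^ m + y ^ m)"
proof -
  have "(x + y) ^ m \<le> (2 * max x y) ^ m" using assms by (intro power_mono) auto
  also have "\<dots> = 2 ^ m * max x y ^ m" by (simp add: power_mult_distrib)
  also have "max x y ^ m \<le> x ^ m + y ^ m" using assms by (cases "x \<le> y") (auto simp: max_def)
  then have "2 ^ m * max x y ^ m \<le> 2 ^ m * (x ^ m + y ^ m)" by simp
  finally show ?thesis .
qed

lemma kern_nonneg: "kern r q \<ge> 0" unfolding kern_def by simp

lemma kern_sym: "kern r q = kern q r" unfolding kern_def by (simp add: gcd.commute mult.commute)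

lemma pair_arith:
  fixes r q m :: nat and \<rho> \<sigma> w lm M :: real
  assumes r1: "r \<ge> 1" and q1: "q \<ge> 1" and rho: "\<rho> > 0" and sig: "\<sigma> > 0" and w0: "w \<ge> 0"
    and mw: "real m + w \<ge> 3" and m1: "m \<ge> 1"
    and lam: "lm = (real r / real q) powr (w / real m)" and lam1: "lm \<le> 1"
    and M: "M \<le> (32 * min \<rho> 1 * min (lm * \<sigma>) 1 + 8 * real (gcd r q) * min (min \<rho> 1 / r) (min (lm * \<sigma>) 1 / q)) ^ m"
  shows "(real (gcd r q) / real r) powr w * M
    \<le> 64 ^ m * ((min \<rho> 1) ^ m * (min \<sigma> 1) ^ m + kern r q * sqrt ((min \<rho> 1) ^ m * (min \<sigma> 1) ^ m))"
proof -
  define a where "a = min \<rho> 1"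
  define b where "b = min (lm * \<sigma>) 1"
  define d where "d = real (gcd r q)"
  define h where "h = min (a / r) (b / q)"
  define f where "f = (d / r) powr w"
  define B where "B = (32 * a * b + 8 * d * h) ^ m"
  have lpos: "lm > 0" unfolding lam using r1 q1 by simp
  have a0: "0 < a" "a \<le> 1" using rho a_def by auto
  have b0: "0 < b" "b \<le> 1" using sig lpos b_def by auto
  have dpos: "d > 0" "d \<le> r" unfolding d_def using r1
    by (simp_all add: gcd_le1_nat)
  have hpos: "h > 0" unfolding h_def using a0 b0 r1 q1 by simp
  have f01: "0 \<le> f" "f \<le> 1" unfolding f_def using dpos w0 r1 by (auto intro!: powr_le1)
  have fM: "f * M \<le> f * B" using M f01 unfolding B_def a_def b_def h_def d_def by (simp add: mult_left_mono)
  have kn: "kern r q \<ge> 0" by (rule kern_nonneg)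
  show ?thesis
  proof (cases "\<sigma> \<ge> 1")
    case True
    then have s1: "min \<sigma> 1 = 1" by simp
    have "d * h \<le> d * (a / r)" unfolding h_def using dpos by (intro mult_left_mono) auto
    also have "\<dots> \<le> a" using dpos a0 r1 by (simp add: field_simps mult_right_mono)
    finally have dh: "d * h \<le> a" .
    have "32 * a * b \<le> 32 * a" using a0 b0 by simp
    then have "32 * a * b + 8 * d * h \<le> 40 * a" using dh by linarith
    then have B40: "B \<le> (40 * a) ^ m" unfolding B_def using a0 b0 dpos hpos by (intro power_mono) auto
    have B0: "0 \<le> B" unfolding B_def using a0 b0 dpos hpos by simp
    have "f * B \<le> B" using f01 B0 by (simp add: mult_left_le_one_le)
    also have "\<dots> \<le> 40 ^ m * a ^ m" using B40 by (simp add: power_mult_distrib)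
    also have "\<dots> \<le> 64 ^ m * a ^ m" using a0 by (intro mult_right_mono power_mono) auto
    also have "\<dots> \<le> 64 ^ m * (a ^ m * 1 ^ m + kern r q * sqrt (a ^ m * 1 ^ m))"
      using kn a0 by (intro mult_left_mono) auto
    finally have "f * M \<le> 64 ^ m * (a ^ m * 1 ^ m + kern r q * sqrt (a ^ m * 1 ^ m))" using fM by linarith
    then show ?thesis unfolding s1 a_def f_def d_def .
  next
    case False
    then have s1: "min \<sigma> 1 = \<sigma>" by simp
    have bl: "b \<le> lm * \<sigma>" unfolding b_def by simp
    have "lm * \<sigma> \<le> 1 * \<sigma>" using lam1 sig by (intro mult_right_mono) auto
    then have bs: "b \<le> \<sigma>" using bl by simp
    have B2: "B \<le> 2 ^ m * ((32 * a * b) ^ m + (8 * d * h) ^ m)"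
      unfolding B_def using a0 b0 dpos hpos by (intro pow_sum_le) auto
    have t1: "(32 * a * b) ^ m \<le> 32 ^ m * (a ^ m * \<sigma> ^ m)"
    proof -
      have "(32 * a * b) ^ m \<le> (32 * a * \<sigma>) ^ m" using bs a0 b0 by (intro power_mono) auto
      then show ?thesis by (simp add: power_mult_distrib)
    qed
    have hm: "h ^ m \<le> sqrt (a ^ m * \<sigma> ^ m) * sqrt ((real r / real q) powr w / (real r * real q) ^ m)"
    proof -
      have "h ^ 2 \<le> (a / r) * (b / q)"
      proof -
        have "h * h \<le> (a / r) * (b / q)" unfolding h_def using a0 b0 r1 q1
          by (intro mult_mono) auto
        then show ?thesis by (simp add: power2_eq_square)
      qed
      also have "\<dots> \<le> (a / r) * (lm * \<sigma> / q)" using bl a0 r1 q1 by (intro mult_left_mono divide_right_mono) auto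
      also have "\<dots> = (a * \<sigma>) * lm / (real r * real q)" by simp
      finally have h2: "h ^ 2 \<le> (a * \<sigma>) * lm / (real r * real q)" .
      have "(h ^ m) ^ 2 = (h ^ 2) ^ m" by (simp add: power_mult[symmetric] mult.commute)
      also have "\<dots> \<le> ((a * \<sigma>) * lm / (real r * real q)) ^ m" using h2 hpos by (intro power_mono) auto
      also have "\<dots> = (a ^ m * \<sigma> ^ m) * ((real r / real q) powr w / (real r * real q) ^ m)"
      proof -
        have "lm ^ m = (real r / real q) powr w"
        proof -
          have "lm ^ m = lm powr (real m)" using lpos by (simp add: powr_realpow)
          also have "\<dots> = (real r / real q) powr (w / real m * real m)" unfolding lam by (simp add: powr_powr)
          also have "w / real m * real m = w" using m1 by simp
          finally show ?thesis .
        qed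
        then show ?thesis by (simp add: power_mult_distrib power_divide)
      qed
      finally have "(h ^ m) ^ 2 \<le> (a ^ m * \<sigma> ^ m) * ((real r / real q) powr w / (real r * real q) ^ m)" .
      then have "h ^ m \<le> sqrt ((a ^ m * \<sigma> ^ m) * ((real r / real q) powr w / (real r * real q) ^ m))"
        by (rule real_le_rsqrt)
      then show ?thesis by (simp only: real_sqrt_mult[of "a ^ m * \<sigma> ^ m"])
    qed
    have fk: "f * d ^ m * sqrt ((real r / real q) powr w / (real r * real q) ^ m) \<le> kern r q"
    proof -
      have "f * d ^ m * sqrt ((real r / real q) powr w / (real r * real q) ^ m) = (d^2 / (real r * real q)) powr ((real m + w) / 2)"
        unfolding f_def using ident[of d "real r" "real q" w m] dpos r1 q1 by simp
      also have "\<dots> \<le> (d^2 / (real r * real q)) powr (3/2)"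
      proof (rule powr_mono')
        show "3/2 \<le> (real m + w) / 2" using mw by simp
        show "0 \<le> d^2 / (real r * real q)" using dpos by simp
        have "d ^ 2 \<le> real r * real q"
        proof -
          have "d \<le> real q" unfolding d_def using q1 by (simp add: gcd_le2_nat)
          then show ?thesis using dpos by (simp add: power2_eq_square mult_mono)
        qed
        then show "d^2 / (real r * real q) \<le> 1" using r1 q1 by simp
      qed
      also have "\<dots> = kern r q" unfolding kern_def d_def by simp
      finally show ?thesis .
    qed
    have t2: "f * (8 * d * h) ^ m \<le> 8 ^ m * (kern r q * sqrt (a ^ m * \<sigma> ^ m))"
    proof -
      have "f * (8 * d * h) ^ m = 8 ^ m * (f * d ^ m * h ^ m)" by (simp add: power_mult_distrib)
      also have "f * d ^ m * h ^ m \<le> f * d ^ m * (sqrt (a ^ m * \<sigma> ^ m) * sqrt ((real r / real q) powr w / (real r * real q) ^ m))"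
        using hm f01 dpos by (intro mult_left_mono) auto
      also have "\<dots> = (f * d ^ m * sqrt ((real r / real q) powr w / (real r * real q) ^ m)) * sqrt (a ^ m * \<sigma> ^ m)"
        by simp
      also have "\<dots> \<le> kern r q * sqrt (a ^ m * \<sigma> ^ m)" using fk a0 sig by (intro mult_right_mono) auto
      finally show ?thesis by simp
    qed
    have "f * B \<le> f * (2 ^ m * ((32 * a * b) ^ m + (8 * d * h) ^ m))" using B2 f01 by (intro mult_left_mono) auto
    also have "\<dots> = 2 ^ m * (f * (32 * a * b) ^ m) + 2 ^ m * (f * (8 * d * h) ^ m)" by (simp add: algebra_simps)
    also have "\<dots> \<le> 2 ^ m * (32 ^ m * (a ^ m * \<sigma> ^ m)) + 2 ^ m * (8 ^ m * (kern r q * sqrt (a ^ m * \<sigma> ^ m)))"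
    proof (intro add_mono mult_left_mono)
      have "f * (32 * a * b) ^ m \<le> 1 * (32 * a * b) ^ m" using f01 a0 b0 by (intro mult_right_mono) auto
      then show "f * (32 * a * b) ^ m \<le> 32 ^ m * (a ^ m * \<sigma> ^ m)" using t1 by simp
    qed (use t2 in auto)
    also have "\<dots> = 64 ^ m * (a ^ m * \<sigma> ^ m) + 16 ^ m * (kern r q * sqrt (a ^ m * \<sigma> ^ m))"
      by (simp add: power_mult_distrib[symmetric] mult.assoc[symmetric])
    also have "\<dots> \<le> 64 ^ m * (a ^ m * \<sigma> ^ m) + 64 ^ m * (kern r q * sqrt (a ^ m * \<sigma> ^ m))"
      using kn a0 sig by (intro add_left_mono mult_right_mono power_mono) auto
    finally show ?thesis using fM s1 unfolding a_def f_def d_def by (simp add: algebra_simps)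
  qed
qed



definition Zc :: real where "Zc = suminf (\<lambda>n::nat. real n powr (-3/2))"

lemma Z_summable: "summable (\<lambda>n::nat. real n powr (-3/2))"
  by (simp add: summable_real_powr_iff)

lemma Z_partial: "finite A \<Longrightarrow> (\<Sum>j\<in>A. real j powr (-3/2)) \<le> Zc"
  unfolding Zc_def by (rule sum_le_suminf[OF Z_summable]) auto

lemma Z_nonneg: "Zc \<ge> 0"
  unfolding Zc_def by (rule suminf_nonneg[OF Z_summable]) simp

lemma kern_row:
  assumes r1: "r \<ge> 1"
  shows "(\<Sum>q\<in>{1..Q}. kern r q) \<le> Zc ^ 2"
proof -
  define g where "g = (\<lambda>d q::nat. (real d ^ 2 / (real r * real q)) powr (3/2))"
  define D where "D = {d\<in>{1..r}. d dvd r}"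
  have finD: "finite D" unfolding D_def by simp
  have gnn: "g d q \<ge> 0" for d q unfolding g_def by simp
  have step1: "kern r q \<le> (\<Sum>d\<in>{d. d \<in> D \<and> d dvd q}. g d q)" if q: "q \<in> {1..Q}" for q
  proof -
    have "gcd r q \<in> {d. d \<in> D \<and> d dvd q}" unfolding D_def using r1 q
      by (auto simp: gcd_le1_nat Suc_le_eq)
    then have "g (gcd r q) q \<le> (\<Sum>d\<in>{d. d \<in> D \<and> d dvd q}. g d q)"
      using finD gnn by (intro member_le_sum) auto
    then show ?thesis unfolding kern_def g_def by simp
  qed
  have "(\<Sum>q\<in>{1..Q}. kern r q) \<le> (\<Sum>q\<in>{1..Q}. \<Sum>d\<in>{d. d \<in> D \<and> d dvd q}. g d q)"
    by (intro sum_mono step1)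
  also have "\<dots> = (\<Sum>d\<in>D. \<Sum>q\<in>{q. q \<in> {1..Q} \<and> d dvd q}. g d q)"
    by (rule sum.swap_restrict) (simp_all add: finD)
  also have "\<dots> \<le> (\<Sum>d\<in>D. (real d / real r) powr (3/2) * Zc)"
  proof (rule sum_mono)
    fix d assume dD: "d \<in> D"
    then have d1: "d \<ge> 1" unfolding D_def by simp
    have sub: "{q. q \<in> {1..Q} \<and> d dvd q} \<subseteq> (\<lambda>j. d * j) ` {1..Q}"
    proof
      fix q assume "q \<in> {q. q \<in> {1..Q} \<and> d dvd q}"
      then obtain j where qj: "q = d * j" and q: "1 \<le> q" "q \<le> Q" by (auto elim: dvdE)
      have "j \<ge> 1" using qj q by (cases j) auto
      moreover have "j \<le> Q" using qj q d1 by (metis dual_order.trans mult_le_mono1 mult_1)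
      ultimately show "q \<in> (\<lambda>j. d * j) ` {1..Q}" using qj by auto
    qed
    have "(\<Sum>q\<in>{q. q \<in> {1..Q} \<and> d dvd q}. g d q) \<le> (\<Sum>q\<in>(\<lambda>j. d * j) ` {1..Q}. g d q)"
      by (rule sum_mono2) (use sub gnn in auto)
    also have "\<dots> = (\<Sum>j\<in>{1..Q}. g d (d * j))"
      by (rule sum.reindex_cong[of "\<lambda>j. d * j"]) (use d1 in \<open>auto simp: inj_on_def\<close>)
    also have "\<dots> = (\<Sum>j\<in>{1..Q}. (real d / real r) powr (3/2) * real j powr (-3/2))"
    proof (rule sum.cong)
      fix j assume "j \<in> {1..Q}"
      then have j1: "j \<ge> 1" by simp
      have "real d ^ 2 / (real r * real (d * j)) = (real d / real r) * (1 / real j)"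
        using d1 by (simp add: power2_eq_square field_simps)
      then have "g d (d * j) = ((real d / real r) * (1 / real j)) powr (3/2)" unfolding g_def by simp
      also have "\<dots> = (real d / real r) powr (3/2) * (1 / real j) powr (3/2)" by (rule powr_mult)
      also have "(1 / real j) powr (3/2) = real j powr (-3/2)"
        using j1 by (simp add: powr_divide powr_minus_divide)
      finally show "g d (d * j) = (real d / real r) powr (3/2) * real j powr (-3/2)" .
    qed simp
    also have "\<dots> = (real d / real r) powr (3/2) * (\<Sum>j\<in>{1..Q}. real j powr (-3/2))"
      by (simp add: sum_distrib_left)
    also have "\<dots> \<le> (real d / real r) powr (3/2) * Zc"
      by (intro mult_left_mono Z_partial) auto
    finally show "(\<Sum>q\<in>{q. q \<in> {1..Q} \<and> d dvd q}. g d q) \<le> (real d / real r) powr (3/2) * Zc" .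
  qed
  also have "\<dots> = Zc * (\<Sum>d\<in>D. real (r div d) powr (-3/2))"
  proof -
    have "(real d / real r) powr (3/2) = real (r div d) powr (-3/2)" if "d \<in> D" for d
    proof -
      from that have d: "d dvd r" "d \<ge> 1" unfolding D_def by auto
      then have "real r = real d * real (r div d)" by (simp flip: of_nat_mult)
      then have "real d / real r = 1 / real (r div d)" using d by (simp add: field_simps)
      then show ?thesis by (simp add: powr_divide powr_minus_divide)
    qed
    then show ?thesis by (simp add: sum_distrib_left mult.commute)
  qed
  also have "(\<Sum>d\<in>D. real (r div d) powr (-3/2)) = (\<Sum>e\<in>(\<lambda>d. r div d) ` D. real e powr (-3/2))"
  proof (rule sum.reindex_cong[symmetric, of "\<lambda>d. r div d"])
    show "inj_on (\<lambda>d. r div d) D"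
    proof (rule inj_onI)
      fix x y assume "x \<in> D" "y \<in> D" "r div x = r div y"
      then have xy: "x dvd r" "y dvd r" "r div x = r div y" unfolding D_def by auto
      have ex: "x * (r div x) = r" using xy(1) by simp
      have ey: "y * (r div y) = r" using xy(2) by simp
      have pos: "r div x \<noteq> 0" using ex r1 by (metis mult_0_right not_one_le_zero)
      have "x * (r div x) = y * (r div x)" using ex ey xy(3) by simp
      then show "x = y" using pos by simp
    qed
  qed auto
  also have "Zc * (\<Sum>e\<in>(\<lambda>d. r div d) ` D. real e powr (-3/2)) \<le> Zc * Zc"
    using finD by (intro mult_left_mono Z_partial Z_nonneg) auto
  finally show ?thesis by (simp add: power2_eq_square)
qed

lemma kern_double:
  fixes V :: "nat \<Rightarrow> real"
  assumes V: "\<And>q. V q \<ge> 0"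
  shows "(\<Sum>q\<in>{1..Q}. \<Sum>r\<in>{1..Q}. kern r q * sqrt (V r * V q)) \<le> Zc ^ 2 * (\<Sum>q\<in>{1..Q}. V q)"
proof -
  have "(\<Sum>q\<in>{1..Q}. \<Sum>r\<in>{1..Q}. kern r q * sqrt (V r * V q))
     \<le> (\<Sum>q\<in>{1..Q}. \<Sum>r\<in>{1..Q}. kern r q * ((V r + V q) / 2))"
    using V kern_nonneg by (intro sum_mono mult_left_mono arith_geo_mean_sqrt) auto
  also have "\<dots> = (\<Sum>q\<in>{1..Q}. \<Sum>r\<in>{1..Q}. kern r q * V r) / 2 + (\<Sum>q\<in>{1..Q}. \<Sum>r\<in>{1..Q}. kern r q * V q) / 2"
  proof -
    have "(\<Sum>q\<in>{1..Q}. \<Sum>r\<in>{1..Q}. kern r q * ((V r + V q) / 2))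
        = (\<Sum>q\<in>{1..Q}. \<Sum>r\<in>{1..Q}. kern r q * V r / 2 + kern r q * V q / 2)"
      by (intro sum.cong refl) (simp add: field_simps)
    also have "\<dots> = (\<Sum>q\<in>{1..Q}. \<Sum>r\<in>{1..Q}. kern r q * V r) / 2 + (\<Sum>q\<in>{1..Q}. \<Sum>r\<in>{1..Q}. kern r q * V q) / 2"
      by (simp only: sum.distrib sum_divide_distrib)
    finally show ?thesis .
  qed
  also have "(\<Sum>q\<in>{1..Q}. \<Sum>r\<in>{1..Q}. kern r q * V r) = (\<Sum>r\<in>{1..Q}. V r * (\<Sum>q\<in>{1..Q}. kern r q))"
    by (subst sum.swap) (simp add: sum_distrib_left mult.commute)
  also have "\<dots> \<le> (\<Sum>r\<in>{1..Q}. V r * Zc ^ 2)"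
    using V kern_row by (intro sum_mono mult_left_mono) auto
  also have "(\<Sum>q\<in>{1..Q}. \<Sum>r\<in>{1..Q}. kern r q * V q) = (\<Sum>q\<in>{1..Q}. V q * (\<Sum>r\<in>{1..Q}. kern q r))"
    by (simp add: sum_distrib_left mult.commute kern_sym)
  also have "\<dots> \<le> (\<Sum>q\<in>{1..Q}. V q * Zc ^ 2)"
    using V kern_row by (intro sum_mono mult_left_mono) auto
  finally show ?thesis by (simp add: sum_distrib_left mult.commute)
qed

lemma kern_tri:
  fixes V :: "nat \<Rightarrow> real"
  assumes V: "\<And>q. V q \<ge> 0"
  shows "(\<Sum>q\<in>{1..Q}. \<Sum>r\<in>{1..q}. kern r q * sqrt (V r * V q)) \<le> Zc ^ 2 * (\<Sum>q\<in>{1..Q}. V q)"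
proof -
  have "(\<Sum>q\<in>{1..Q}. \<Sum>r\<in>{1..q}. kern r q * sqrt (V r * V q)) \<le> (\<Sum>q\<in>{1..Q}. \<Sum>r\<in>{1..Q}. kern r q * sqrt (V r * V q))"
    using V kern_nonneg by (intro sum_mono sum_mono2) auto
  also have "\<dots> \<le> Zc ^ 2 * (\<Sum>q\<in>{1..Q}. V q)" by (rule kern_double[OF V])
  finally show ?thesis .
qed



lemma pair_meas:
  fixes c :: "nat \<Rightarrow> real^'n" and rho :: "nat \<Rightarrow> real" and w :: real
  assumes pos: "\<And>q. rho q > 0" and w0: "w \<ge> 0" and mw: "real CARD('n) + w \<ge> 3"
    and r1: "r \<ge> 1" and q1: "q \<ge> 1" and rq: "r \<le> q \<or> w = 0"
  shows "(real (gcd r q) / real r) powr w *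
      measure lebesgue (A1m r (torus_ball (c r) (rho r)) \<inter>
        A1m q (torus_ball (c q) ((real r / real q) powr (w / real CARD('n)) * rho q)))
    \<le> 64 ^ CARD('n) * ((min (rho r) 1) ^ CARD('n) * (min (rho q) 1) ^ CARD('n)
         + kern r q * sqrt ((min (rho r) 1) ^ CARD('n) * (min (rho q) 1) ^ CARD('n)))"
proof -
  define lm where "lm = (real r / real q) powr (w / real CARD('n))"
  have lpos: "lm > 0" unfolding lm_def using r1 q1 by simp
  have lm1: "lm \<le> 1"
  proof (cases "w = 0")
    case True then show ?thesis unfolding lm_def using r1 q1 by simp
  next
    case False
    then have "r \<le> q" using rq by simp
    then show ?thesis unfolding lm_def using r1 q1 w0 by (intro powr_le1) auto
  qed
  have sig: "lm * rho q > 0" using lpos pos by simp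
  have M: "measure lebesgue (A1m r (torus_ball (c r) (rho r)) \<inter> A1m q (torus_ball (c q) (lm * rho q)))
     \<le> (32 * min (rho r) 1 * min (lm * rho q) 1 + 8 * real (gcd r q) * min (min (rho r) 1 / r) (min (lm * rho q) 1 / q)) ^ CARD('n)"
    by (rule inter_bound[OF r1 q1 pos sig])
  show ?thesis
    unfolding lm_def[symmetric]
    by (rule pair_arith[OF r1 q1 pos pos w0 mw _ lm_def lm1 M]) simp
qed

lemma unbounded_partial:
  fixes f :: "nat \<Rightarrow> real"
  assumes nn: "\<And>q. f q \<ge> 0" and ns: "\<not> summable f"
  shows "\<exists>N. \<forall>Q\<ge>N. B \<le> (\<Sum>q\<in>{1..Q}. f q)"
proof -
  have "\<not> (\<forall>n. (\<Sum>k\<le>n. f k) \<le> B + f 0)"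
    using bounded_imp_summable[of f "B + f 0"] nn ns by blast
  then obtain n where n: "(\<Sum>k\<le>n. f k) > B + f 0" by (auto simp: not_le)
  have "{..n} = insert 0 {1..n}" by auto
  then have "(\<Sum>k\<le>n. f k) = f 0 + (\<Sum>k\<in>{1..n}. f k)" by simp
  then have "B \<le> (\<Sum>k\<in>{1..n}. f k)" using n by linarith
  moreover have "(\<Sum>k\<in>{1..n}. f k) \<le> (\<Sum>k\<in>{1..Q}. f k)" if "Q \<ge> n" for Q
    using that nn by (intro sum_mono2) auto
  ultimately show ?thesis by (intro exI[of _ n]) (auto intro: order.trans)
qed

lemma limsup_pos:
  fixes g :: "nat \<Rightarrow> real"
  assumes "\<exists>N. \<forall>Q\<ge>N. c \<le> g Q" and "c > 0"
  shows "limsup (\<lambda>Q. ereal (g Q)) > 0"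
proof -
  have "eventually (\<lambda>Q. ereal c \<le> ereal (g Q)) sequentially"
    using assms(1) by (auto simp: eventually_sequentially)
  then have "ereal c \<le> limsup (\<lambda>Q. ereal (g Q))" by (intro le_Limsup) auto
  then show ?thesis using assms(2) by (meson ereal_less(2) order.strict_trans2)
qed

lemma ratio_lower:
  fixes N D X a b :: real
  assumes "D > 0" "N \<ge> a * X" "D \<le> b * X" "a > 0" "b > 0" "X > 0"
  shows "N / D \<ge> a / b"
proof -
  have "a / b \<le> (a * X) / (b * X)" using assms by simp
  also have "\<dots> \<le> N / (b * X)" using assms by (intro divide_right_mono) auto
  also have "\<dots> \<le> N / D" using assms
    by (intro divide_left_mono) (auto intro: order.trans[OF _ assms(2)] simp: mult_pos_pos)
  finally show ?thesis .
qed



lemma sum_bound: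
  fixes c :: "nat \<Rightarrow> real^'n" and rho :: "nat \<Rightarrow> real" and w :: real
  assumes pos: "\<And>q. rho q > 0" and w0: "w \<ge> 0" and mw: "real CARD('n) + w \<ge> 3"
  shows "(\<Sum>q=1..Q. \<Sum>r=1..q. (real (gcd r q) / real r) powr w *
             measure lebesgue (A1m r (torus_ball (c r) (rho r)) \<inter>
               A1m q (torus_ball (c q) ((real r / real q) powr (w / real CARD('n)) * rho q))))
     \<le> 64 ^ CARD('n) * ((\<Sum>q=1..Q. (min (rho q) 1) ^ CARD('n)) ^ 2 + Zc ^ 2 * (\<Sum>q=1..Q. (min (rho q) 1) ^ CARD('n)))"
proof -
  define V where "V = (\<lambda>q. (min (rho q) 1) ^ CARD('n))"
  have Vnn: "V q \<ge> 0" for q unfolding V_def using pos[of q] by simp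
  have "(\<Sum>q=1..Q. \<Sum>r=1..q. (real (gcd r q) / real r) powr w *
             measure lebesgue (A1m r (torus_ball (c r) (rho r)) \<inter>
               A1m q (torus_ball (c q) ((real r / real q) powr (w / real CARD('n)) * rho q))))
     \<le> (\<Sum>q=1..Q. \<Sum>r=1..q. 64 ^ CARD('n) * (V r * V q + kern r q * sqrt (V r * V q)))"
    unfolding V_def by (intro sum_mono pair_meas[OF pos w0 mw]) auto
  also have "\<dots> = 64 ^ CARD('n) * ((\<Sum>q=1..Q. \<Sum>r=1..q. V r * V q) + (\<Sum>q=1..Q. \<Sum>r=1..q. kern r q * sqrt (V r * V q)))"
    by (simp add: sum_distrib_left sum.distrib distrib_left)
  also have "\<dots> \<le> 64 ^ CARD('n) * ((\<Sum>q=1..Q. V q) ^ 2 + Zc ^ 2 * (\<Sum>q=1..Q. V q))"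
  proof (intro mult_left_mono add_mono)
    have "(\<Sum>q=1..Q. \<Sum>r=1..q. V r * V q) \<le> (\<Sum>q=1..Q. \<Sum>r=1..Q. V r * V q)"
      using Vnn by (intro sum_mono sum_mono2) auto
    also have "\<dots> = (\<Sum>q=1..Q. V q) ^ 2" by (simp add: power2_eq_square sum_product mult.commute)
    finally show "(\<Sum>q=1..Q. \<Sum>r=1..q. V r * V q) \<le> (\<Sum>q=1..Q. V q) ^ 2" .
    show "(\<Sum>q=1..Q. \<Sum>r=1..q. kern r q * sqrt (V r * V q)) \<le> Zc ^ 2 * (\<Sum>q=1..Q. V q)"
      by (rule kern_tri[OF Vnn])
  qed simp
  finally show ?thesis unfolding V_def .
qed

lemma sum_bound_sq:
  fixes c :: "nat \<Rightarrow> real^'n" and rho :: "nat \<Rightarrow> real"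
  assumes pos: "\<And>q. rho q > 0" and m3: "CARD('n) \<ge> 3"
  shows "(\<Sum>q=1..Q. \<Sum>r=1..Q. measure lebesgue (A1m q (torus_ball (c q) (rho q)) \<inter> A1m r (torus_ball (c r) (rho r))))
     \<le> 64 ^ CARD('n) * ((\<Sum>q=1..Q. (min (rho q) 1) ^ CARD('n)) ^ 2 + Zc ^ 2 * (\<Sum>q=1..Q. (min (rho q) 1) ^ CARD('n)))"
proof -
  define V where "V = (\<lambda>q. (min (rho q) 1) ^ CARD('n))"
  have Vnn: "V q \<ge> 0" for q unfolding V_def using pos[of q] by simp
  have w0: "(0::real) \<ge> 0" by simp
  have mw: "real CARD('n) + 0 \<ge> 3" using m3 by simp
  have pterm: "measure lebesgue (A1m q (torus_ball (c q) (rho q)) \<inter> A1m r (torus_ball (c r) (rho r)))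
      \<le> 64 ^ CARD('n) * (V r * V q + kern r q * sqrt (V r * V q))" if "q \<ge> 1" "r \<ge> 1" for q r
  proof -
    have "(real (gcd q r) / real q) powr 0 *
      measure lebesgue (A1m q (torus_ball (c q) (rho q)) \<inter>
        A1m r (torus_ball (c r) ((real q / real r) powr (0 / real CARD('n)) * rho r)))
    \<le> 64 ^ CARD('n) * ((min (rho q) 1) ^ CARD('n) * (min (rho r) 1) ^ CARD('n)
         + kern q r * sqrt ((min (rho q) 1) ^ CARD('n) * (min (rho r) 1) ^ CARD('n)))"
      by (rule pair_meas[OF pos w0 mw]) (use that in auto)
    moreover have "(real (gcd q r) / real q) powr 0 = 1" using that by simp
    moreover have "(real q / real r) powr (0 / real CARD('n)) = 1" using that by simp
    ultimately show ?thesis unfolding V_def by (simp add: kern_sym mult.commute)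
  qed
  have "(\<Sum>q=1..Q. \<Sum>r=1..Q. measure lebesgue (A1m q (torus_ball (c q) (rho q)) \<inter> A1m r (torus_ball (c r) (rho r))))
     \<le> (\<Sum>q=1..Q. \<Sum>r=1..Q. 64 ^ CARD('n) * (V r * V q + kern r q * sqrt (V r * V q)))"
    by (intro sum_mono pterm) auto
  also have "\<dots> = 64 ^ CARD('n) * ((\<Sum>q=1..Q. \<Sum>r=1..Q. V r * V q) + (\<Sum>q=1..Q. \<Sum>r=1..Q. kern r q * sqrt (V r * V q)))"
    by (simp add: sum_distrib_left sum.distrib distrib_left)
  also have "\<dots> \<le> 64 ^ CARD('n) * ((\<Sum>q=1..Q. V q) ^ 2 + Zc ^ 2 * (\<Sum>q=1..Q. V q))"
  proof (intro mult_left_mono add_mono)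
    show "(\<Sum>q=1..Q. \<Sum>r=1..Q. V r * V q) \<le> (\<Sum>q=1..Q. V q) ^ 2"
      by (simp add: power2_eq_square sum_product mult.commute)
    show "(\<Sum>q=1..Q. \<Sum>r=1..Q. kern r q * sqrt (V r * V q)) \<le> Zc ^ 2 * (\<Sum>q=1..Q. V q)"
      by (rule kern_double[OF Vnn])
  qed simp
  finally show ?thesis unfolding V_def .
qed



lemma low_A:
  fixes c :: "nat \<Rightarrow> real^'n" and rho :: "nat \<Rightarrow> real"
  assumes pos: "\<And>q. rho q > 0" and q1: "q \<ge> 1"
  shows "measure lebesgue (A1m q (torus_ball (c q) (rho q))) \<ge> (1/4) ^ CARD('n) * (min (rho q) 1) ^ CARD('n)"
  using A1m_lower[OF q1 pos[of q], of "c q"] by (simp add: power_mult_distrib[symmetric] mult.commute)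

lemma low_tv:
  fixes c :: "nat \<Rightarrow> real^'n" and rho :: "nat \<Rightarrow> real"
  assumes pos: "\<And>q. rho q > 0"
  shows "torus_vol (torus_ball (c q) (rho q)) \<ge> (1/4) ^ CARD('n) * (min (rho q) 1) ^ CARD('n)"
  using torus_vol_lower[OF pos[of q], of "c q"] by (simp add: power_mult_distrib[symmetric] mult.commute)

theorem mainTheorem13:
  fixes c :: "nat \<Rightarrow> real^'n" and rho :: "nat \<Rightarrow> real"
  assumes pos: "\<And>q. rho q > 0"
    and div: "\<not> summable (\<lambda>q. torus_vol (torus_ball (c q) (rho q)))"
  defines "S \<equiv> \<lambda>Q. \<Sum>q=1..Q. measure lebesgue (A1m q (torus_ball (c q) (rho q)))"
  shows "(CARD('n) \<ge> 3 \<longrightarrow> QIA_avg c rho)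
    \<and> (CARD('n) \<ge> 2 \<longrightarrow> (\<exists>C. \<forall>Q. S Q \<ge> 1 \<longrightarrow>
          (\<Sum>q=1..Q. \<Sum>r=1..q. (real (gcd q r) / real r) *
             measure lebesgue (A1m r (torus_ball (c r) (rho r)) \<inter>
               A1m q (torus_ball (c q) ((real r / real q) powr (1 / real CARD('n)) * rho q))))
          \<le> C * (S Q)\<^sup>2))
    \<and> (\<exists>C. \<forall>Q. S Q \<ge> 1 \<longrightarrow>
          (\<Sum>q=1..Q. \<Sum>r=1..q. (real (gcd q r) / real r)\<^sup>2 *
             measure lebesgue (A1m r (torus_ball (c r) (rho r)) \<inter>
               A1m q (torus_ball (c q) ((real r / real q) powr (2 / real CARD('n)) * rho q))))
          \<le> C * (S Q)\<^sup>2)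
    \<and> w_QIA (max (3 - real CARD('n)) 0) c rho"
proof -
  define m where "m = CARD('n)"
  define V where "V = (\<lambda>q. (min (rho q) 1) ^ m)"
  define SV where "SV = (\<lambda>Q. \<Sum>q=1..Q. V q)"
  define K where "K = (64::real) ^ m"
  have Vnn: "V q \<ge> 0" for q unfolding V_def using pos[of q] by simp
  have Vpos: "V q > 0" for q unfolding V_def using pos[of q] by simp
  have SVnn: "SV Q \<ge> 0" for Q unfolding SV_def using Vnn by (simp add: sum_nonneg)
  have Kpos: "K > 0" unfolding K_def by simp
  have Z2: "Zc ^ 2 \<ge> 0" by simp
  have S_low: "S Q \<ge> (1/4) ^ m * SV Q" for Q
  proof -
    have "(1/4) ^ m * SV Q = (\<Sum>q=1..Q. (1/4) ^ m * V q)" unfolding SV_def by (simp add: sum_distrib_left)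
    also have "\<dots> \<le> S Q" unfolding S_def V_def m_def by (intro sum_mono low_A[OF pos]) auto
    finally show ?thesis .
  qed
  have SV_le: "SV Q \<le> 4 ^ m * S Q" for Q
  proof -
    have "4 ^ m * ((1/4) ^ m * SV Q) \<le> 4 ^ m * S Q" using S_low[of Q] by (intro mult_left_mono) auto
    moreover have "4 ^ m * ((1/4) ^ m * SV Q) = SV Q" by (simp add: mult.assoc[symmetric] power_mult_distrib[symmetric])
    ultimately show ?thesis by simp
  qed
  have Vns: "\<not> summable V"
  proof
    assume "summable V"
    then have "summable (\<lambda>q. 40 ^ m * V q)" by (intro summable_mult)
    moreover have "norm (torus_vol (torus_ball (c q) (rho q))) \<le> 40 ^ m * V q" for q
    proof -
      have "torus_vol (torus_ball (c q) (rho q)) \<ge> 0" unfolding torus_vol_def by simp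
      then show ?thesis using torus_vol_upper[OF pos[of q], of "c q"] unfolding V_def m_def by simp
    qed
    ultimately have "summable (\<lambda>q. torus_vol (torus_ball (c q) (rho q)))"
      by (rule summable_comparison_test'[where N=0])
    then show False using div by simp
  qed
  obtain N where N: "\<And>Q. Q \<ge> N \<Longrightarrow> 1 \<le> SV Q"
    using unbounded_partial[OF Vnn Vns, of 1] unfolding SV_def by blast
  have Q1: "Q \<ge> 1" if "1 \<le> SV Q" for Q
  proof (rule ccontr)
    assume "\<not> Q \<ge> 1" then have "Q = 0" by simp
    then show False using that unfolding SV_def by simp
  qed
  have gen: "(\<Sum>q=1..Q. \<Sum>r=1..q. (real (gcd r q) / real r) powr w *
             measure lebesgue (A1m r (torus_ball (c r) (rho r)) \<inter>
               A1m q (torus_ball (c q) ((real r / real q) powr (w / real CARD('n)) * rho q))))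
     \<le> K * (SV Q ^ 2 + Zc ^ 2 * SV Q)" if "w \<ge> 0" "real CARD('n) + w \<ge> 3" for w Q
    using sum_bound[OF pos that] unfolding K_def SV_def V_def m_def .
  have Cbound: "K * (SV Q ^ 2 + Zc ^ 2 * SV Q) \<le> K * (16 ^ m + Zc ^ 2 * 4 ^ m) * (S Q)\<^sup>2" if S1: "S Q \<ge> 1" for Q
  proof -
    have "SV Q ^ 2 \<le> (4 ^ m * S Q) ^ 2" using SV_le[of Q] SVnn[of Q] by (intro power_mono) auto
    also have "\<dots> = ((4::real) ^ m) ^ 2 * (S Q)\<^sup>2" by (simp add: power_mult_distrib)
    also have "((4::real) ^ m) ^ 2 = ((4::real) ^ 2) ^ m" by (simp only: power_mult[symmetric] mult.commute)
    also have "((4::real) ^ 2) ^ m = 16 ^ m" by simp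
    finally have a: "SV Q ^ 2 \<le> 16 ^ m * (S Q)\<^sup>2" .
    have "S Q \<le> (S Q)\<^sup>2" using S1 by (simp add: power2_eq_square)
    then have "4 ^ m * S Q \<le> 4 ^ m * (S Q)\<^sup>2" by (intro mult_left_mono) auto
    then have "SV Q \<le> 4 ^ m * (S Q)\<^sup>2" using SV_le[of Q] by linarith
    then have b: "Zc ^ 2 * SV Q \<le> Zc ^ 2 * (4 ^ m * (S Q)\<^sup>2)" using Z2 by (intro mult_left_mono) auto
    have "SV Q ^ 2 + Zc ^ 2 * SV Q \<le> (16 ^ m + Zc ^ 2 * 4 ^ m) * (S Q)\<^sup>2" using a b by (simp add: algebra_simps)
    then show ?thesis using Kpos by (simp add: mult.assoc mult_left_mono)
  qed
  have part2: "\<exists>C. \<forall>Q. S Q \<ge> 1 \<longrightarrow>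
          (\<Sum>q=1..Q. \<Sum>r=1..q. (real (gcd q r) / real r) *
             measure lebesgue (A1m r (torus_ball (c r) (rho r)) \<inter>
               A1m q (torus_ball (c q) ((real r / real q) powr (1 / real CARD('n)) * rho q))))
          \<le> C * (S Q)\<^sup>2" if m2: "CARD('n) \<ge> 2"
  proof (intro exI allI impI)
    fix Q assume S1: "S Q \<ge> 1"
    have "(\<Sum>q=1..Q. \<Sum>r=1..q. (real (gcd q r) / real r) *
             measure lebesgue (A1m r (torus_ball (c r) (rho r)) \<inter>
               A1m q (torus_ball (c q) ((real r / real q) powr (1 / real CARD('n)) * rho q))))
        = (\<Sum>q=1..Q. \<Sum>r=1..q. (real (gcd r q) / real r) powr 1 *
             measure lebesgue (A1m r (torus_ball (c r) (rho r)) \<inter>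
               A1m q (torus_ball (c q) ((real r / real q) powr (1 / real CARD('n)) * rho q))))"
      by (intro sum.cong refl) (simp add: gcd.commute)
    also have "\<dots> \<le> K * (SV Q ^ 2 + Zc ^ 2 * SV Q)" by (rule gen) (use m2 in auto)
    also have "\<dots> \<le> K * (16 ^ m + Zc ^ 2 * 4 ^ m) * (S Q)\<^sup>2" by (rule Cbound[OF S1])
    finally show "(\<Sum>q=1..Q. \<Sum>r=1..q. (real (gcd q r) / real r) *
             measure lebesgue (A1m r (torus_ball (c r) (rho r)) \<inter>
               A1m q (torus_ball (c q) ((real r / real q) powr (1 / real CARD('n)) * rho q))))
          \<le> K * (16 ^ m + Zc ^ 2 * 4 ^ m) * (S Q)\<^sup>2" .
  qed
  have part3: "\<exists>C. \<forall>Q. S Q \<ge> 1 \<longrightarrow>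
          (\<Sum>q=1..Q. \<Sum>r=1..q. (real (gcd q r) / real r)\<^sup>2 *
             measure lebesgue (A1m r (torus_ball (c r) (rho r)) \<inter>
               A1m q (torus_ball (c q) ((real r / real q) powr (2 / real CARD('n)) * rho q))))
          \<le> C * (S Q)\<^sup>2"
  proof (intro exI allI impI)
    fix Q assume S1: "S Q \<ge> 1"
    have "(\<Sum>q=1..Q. \<Sum>r=1..q. (real (gcd q r) / real r)\<^sup>2 *
             measure lebesgue (A1m r (torus_ball (c r) (rho r)) \<inter>
               A1m q (torus_ball (c q) ((real r / real q) powr (2 / real CARD('n)) * rho q))))
        = (\<Sum>q=1..Q. \<Sum>r=1..q. (real (gcd r q) / real r) powr 2 *
             measure lebesgue (A1m r (torus_ball (c r) (rho r)) \<inter>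
               A1m q (torus_ball (c q) ((real r / real q) powr (2 / real CARD('n)) * rho q))))"
      by (intro sum.cong refl) (simp add: gcd.commute)
    also have "\<dots> \<le> K * (SV Q ^ 2 + Zc ^ 2 * SV Q)" by (rule gen) auto
    also have "\<dots> \<le> K * (16 ^ m + Zc ^ 2 * 4 ^ m) * (S Q)\<^sup>2" by (rule Cbound[OF S1])
    finally show "(\<Sum>q=1..Q. \<Sum>r=1..q. (real (gcd q r) / real r)\<^sup>2 *
             measure lebesgue (A1m r (torus_ball (c r) (rho r)) \<inter>
               A1m q (torus_ball (c q) ((real r / real q) powr (2 / real CARD('n)) * rho q))))
          \<le> K * (16 ^ m + Zc ^ 2 * 4 ^ m) * (S Q)\<^sup>2" .
  qed
  have Dup: "K * (SV Q ^ 2 + Zc ^ 2 * SV Q) \<le> (K * (1 + Zc ^ 2)) * SV Q ^ 2" if "1 \<le> SV Q" for Q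
  proof -
    have "SV Q \<le> SV Q ^ 2" using that by (simp add: power2_eq_square)
    then have "Zc ^ 2 * SV Q \<le> Zc ^ 2 * SV Q ^ 2" using Z2 by (intro mult_left_mono) auto
    moreover have "(1 + Zc ^ 2) * SV Q ^ 2 = SV Q ^ 2 + Zc ^ 2 * SV Q ^ 2" by (simp add: algebra_simps)
    ultimately have "SV Q ^ 2 + Zc ^ 2 * SV Q \<le> (1 + Zc ^ 2) * SV Q ^ 2" by linarith
    then have "K * (SV Q ^ 2 + Zc ^ 2 * SV Q) \<le> K * ((1 + Zc ^ 2) * SV Q ^ 2)" using Kpos by (intro mult_left_mono) auto
    then show ?thesis by (simp only: mult.assoc)
  qed
  define c0 where "c0 = ((1/4) ^ m) ^ 2 / (K * (1 + Zc ^ 2))"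
  have c0pos: "c0 > 0" unfolding c0_def using Kpos by (simp add: add_pos_nonneg)
  have part1: "QIA_avg c rho" if m3: "CARD('n) \<ge> 3"
  proof -
    have "\<forall>Q\<ge>N. c0 \<le> (\<Sum>q=1..Q. measure lebesgue (A1m q (torus_ball (c q) (rho q))))\<^sup>2 /
        (\<Sum>q=1..Q. \<Sum>r=1..Q. measure lebesgue (A1m q (torus_ball (c q) (rho q)) \<inter>
              A1m r (torus_ball (c r) (rho r))))"
    proof (intro allI impI)
      fix Q assume QN: "Q \<ge> N"
      have sv1: "1 \<le> SV Q" using N[OF QN] .
      have q1: "Q \<ge> 1" using Q1[OF sv1] .
      define D where "D = (\<Sum>q=1..Q. \<Sum>r=1..Q. measure lebesgue (A1m q (torus_ball (c q) (rho q)) \<inter>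
              A1m r (torus_ball (c r) (rho r))))"
      have "measure lebesgue (A1m 1 (torus_ball (c 1) (rho 1)) \<inter> A1m 1 (torus_ball (c 1) (rho 1)))
          \<le> (\<Sum>r=1..Q. measure lebesgue (A1m 1 (torus_ball (c 1) (rho 1)) \<inter> A1m r (torus_ball (c r) (rho r))))"
        using q1 by (intro member_le_sum) auto
      also have "\<dots> \<le> D" unfolding D_def using q1
        by (intro member_le_sum[of 1 "{1..Q}" "\<lambda>q. \<Sum>r=1..Q. measure lebesgue (A1m q (torus_ball (c q) (rho q)) \<inter> A1m r (torus_ball (c r) (rho r)))"] sum_nonneg) auto
      finally have "measure lebesgue (A1m 1 (torus_ball (c 1) (rho 1))) \<le> D" by simp
      moreover have "measure lebesgue (A1m 1 (torus_ball (c 1) (rho 1))) > 0"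
      proof -
        have "(1/4) ^ m * V 1 > 0" using Vpos[of 1] by simp
        moreover have "(1/4) ^ CARD('n) * (min (rho 1) 1) ^ CARD('n) \<le> measure lebesgue (A1m 1 (torus_ball (c 1) (rho 1)))"
          by (rule low_A[OF pos]) simp
        ultimately show ?thesis unfolding V_def m_def by linarith
      qed
      ultimately have Dpos: "D > 0" by linarith
      have Dle: "D \<le> (K * (1 + Zc ^ 2)) * SV Q ^ 2"
        using sum_bound_sq[where rho=rho and c=c and Q=Q, OF pos m3] Dup[OF sv1] unfolding D_def K_def SV_def V_def m_def by linarith
      have Nl: "(S Q)\<^sup>2 \<ge> ((1/4) ^ m) ^ 2 * SV Q ^ 2"
      proof -
        have "((1/4) ^ m * SV Q) ^ 2 \<le> (S Q) ^ 2" using S_low[of Q] SVnn[of Q] by (intro power_mono) auto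
        then show ?thesis by (simp add: power_mult_distrib)
      qed
      have "c0 \<le> (S Q)\<^sup>2 / D" unfolding c0_def
        by (rule ratio_lower[OF Dpos Nl Dle]) (use Kpos sv1 in \<open>auto simp: add_pos_nonneg\<close>)
      then show "c0 \<le> (\<Sum>q=1..Q. measure lebesgue (A1m q (torus_ball (c q) (rho q))))\<^sup>2 / D"
        unfolding S_def by simp
    qed
    then show ?thesis unfolding QIA_avg_def by (intro limsup_pos[OF _ c0pos]) blast
  qed
  have part4: "w_QIA (max (3 - real CARD('n)) 0) c rho"
  proof -
    define w where "w = max (3 - real CARD('n)) 0"
    have w0: "w \<ge> 0" and mw: "real CARD('n) + w \<ge> 3" unfolding w_def by auto
    have "\<forall>Q\<ge>N. c0 \<le> (\<Sum>q=1..Q. torus_vol (torus_ball (c q) (rho q)))\<^sup>2 /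
        (\<Sum>q=1..Q. \<Sum>r=1..q. (real (gcd r q) / real r) powr w *
           measure lebesgue (A1m r (torus_ball (c r) (rho r)) \<inter>
              A1m q (torus_ball (c q) ((real r / real q) powr (w / real CARD('n)) * rho q))))"
    proof (intro allI impI)
      fix Q assume QN: "Q \<ge> N"
      have sv1: "1 \<le> SV Q" using N[OF QN] .
      have q1: "Q \<ge> 1" using Q1[OF sv1] .
      define f where "f = (\<lambda>r q. (real (gcd r q) / real r) powr w *
           measure lebesgue (A1m r (torus_ball (c r) (rho r)) \<inter>
              A1m q (torus_ball (c q) ((real r / real q) powr (w / real CARD('n)) * rho q))))"
      define D where "D = (\<Sum>q=1..Q. \<Sum>r=1..q. f r q)"
      have fnn: "f r q \<ge> 0" for r q unfolding f_def by simp
      have "f 1 1 \<le> (\<Sum>r=1..1. f r 1)" by simp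
      also have "\<dots> \<le> D" unfolding D_def using q1 fnn
        by (intro member_le_sum[of 1 "{1..Q}" "\<lambda>q. \<Sum>r=1..q. f r q"] sum_nonneg) auto
      finally have "f 1 1 \<le> D" .
      moreover have "f 1 1 = measure lebesgue (A1m 1 (torus_ball (c 1) (rho 1)))" unfolding f_def by simp
      moreover have "measure lebesgue (A1m 1 (torus_ball (c 1) (rho 1))) > 0"
      proof -
        have "(1/4) ^ m * V 1 > 0" using Vpos[of 1] by simp
        moreover have "(1/4) ^ CARD('n) * (min (rho 1) 1) ^ CARD('n) \<le> measure lebesgue (A1m 1 (torus_ball (c 1) (rho 1)))"
          by (rule low_A[OF pos]) simp
        ultimately show ?thesis unfolding V_def m_def by linarith
      qed
      ultimately have Dpos: "D > 0" by linarith
      have Dle: "D \<le> (K * (1 + Zc ^ 2)) * SV Q ^ 2"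
        using gen[OF w0 mw, of Q] Dup[OF sv1] unfolding D_def f_def by linarith
      have Nl: "(\<Sum>q=1..Q. torus_vol (torus_ball (c q) (rho q)))\<^sup>2 \<ge> ((1/4) ^ m) ^ 2 * SV Q ^ 2"
      proof -
        have "(1/4) ^ m * SV Q \<le> (\<Sum>q=1..Q. torus_vol (torus_ball (c q) (rho q)))"
          unfolding SV_def sum_distrib_left V_def m_def by (intro sum_mono low_tv[OF pos])
        then have "((1/4) ^ m * SV Q) ^ 2 \<le> (\<Sum>q=1..Q. torus_vol (torus_ball (c q) (rho q))) ^ 2"
          using SVnn[of Q] by (intro power_mono) auto
        then show ?thesis by (simp add: power_mult_distrib)
      qed
      have "c0 \<le> (\<Sum>q=1..Q. torus_vol (torus_ball (c q) (rho q)))\<^sup>2 / D" unfolding c0_def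
        by (rule ratio_lower[OF Dpos Nl Dle]) (use Kpos sv1 in \<open>auto simp: add_pos_nonneg\<close>)
      then show "c0 \<le> (\<Sum>q=1..Q. torus_vol (torus_ball (c q) (rho q)))\<^sup>2 /
        (\<Sum>q=1..Q. \<Sum>r=1..q. (real (gcd r q) / real r) powr w *
           measure lebesgue (A1m r (torus_ball (c r) (rho r)) \<inter>
              A1m q (torus_ball (c q) ((real r / real q) powr (w / real CARD('n)) * rho q))))"
        unfolding D_def f_def by simp
    qed
    then show ?thesis unfolding w_QIA_def w_def[symmetric] by (intro limsup_pos[OF _ c0pos]) blast
  qed
  show ?thesis using part1 part2 part3 part4 by blast
qed


end
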